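(* Consider the NSGA-II with population size $N\ge 4(n+1)$ optimizing \textsc{OneMinMax}, where the offspring population is generated in one of the following four ways: applying one-bit mutation once to each individual of $P_t$; applying standard bit-wise mutation once to each individual of $P_t$; $N$ times independently choosing a parent uniformly at random from $P_t$ and applying one-bit mutation to it; $N$ times independently choosing a parent uniformly at random from $P_t$ and applying standard bit-wise mutation to it. Let $T$ be the number of iterations until $f(P_T)$ contains the whole Pareto front. Then $E[T]\le \frac{2e^2}{e-1}n(\ln n+1)$ (hence at most $\frac{2e^2}{e-1}Nn(\ln n+1)$ fitness evaluations, counting $N$ evaluations per iteration), and for every $\delta\ge 0$, $\Pr\!\left[T\ge \frac{2e^2(1+\delta)}{e-1}n\ln n\right]\le 2n^{-\delta}$.
   Context: Search space $\{0,1\}^n$; objective $f=(f_1,f_2):\{0,1\}^n\to\mathbb{R}^2$, both objectives maximized. $x$ strictly dominates $y$ if $f_1(x)\ge f_1(y)$, $f_2(x)\ge f_2(y)$ and at least one inequality is strict. Populations are multisets of bit strings; for a population $P$, $f(P)=\{f(x):x\in P\}$. Non-dominated sorting of a population $S$: $F_1$ is the set of individuals of $S$ not strictly dominated by any individual of $S$; inductively, $F_{k+1}$ is the set of individuals of $S\setminus(F_1\cup\dots\cup F_k)$ not strictly dominated by any individual of $S\setminus(F_1\cup\dots\cup F_k)$; the rank of $x$ in $S$ is the $k$ with $x\in F_k$. Crowding distance of the individuals of a set $S$ (computed with respect to $S$): start with $\mathrm{cDis}(x)=0$ for all $x\in S$; for each $i\in\{1,2\}$, sort $S$ in ascending $f_i$-value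 as $S_{i.1},\dots,S_{i.|S|}$ (ties broken arbitrarily), set $\mathrm{cDis}(S_{i.1})=\mathrm{cDis}(S_{i.|S|})=+\infty$, and for $2\le j\le |S|-1$ add $\frac{f_i(S_{i.j+1})-f_i(S_{i.j-1})}{f_i(S_{i.|S|})-f_i(S_{i.1})}$ to $\mathrm{cDis}(S_{i.j})$ (if $f_i$ is constant on $S$, these summands are taken to be $0$). The NSGA-II with population size $N$: $P_0$ consists of $N$ independent uniformly random bit strings; in iteration $t=0,1,2,\dots$ it generates an offspring population $Q_t$ of $N$ individuals, sets $R_t=P_t\cup Q_t$ (multiset union, $2N$ individuals), computes the fronts $F_1,F_2,\dots$ of $R_t$, lets $i^*$ be minimal with $\sum_{i\le i^*}|F_i|\ge N$, computes the crowding distance of each individual of $F_i$ ($i\le i^*$) with respect to $F_i$, and sets $P_{t+1}=F_1\cup\dots\cup F_{i^*-1}\cup\tilde F_{i^*}$, where $\tilde F_{i^*}$ consists of the $N-\sum_{i<i^*}|F_i|$ individuals of $F_{i^*}$ with largest crowding distance, ties broken uniformly at random. One-bit mutation flips exactly one bit position chosen uniformly at random; standard bit-wise mutation flips each bit independently with probability $1/n$; all random choices are independent. \textsc{OneMinMax}: $f(x)=(n-\sum_{i=1}^n x_i,\ \sum_{i=1}^n x_i)$; its Pareto front is $\{(k,n-k):k\in\{0,\dots,n\}\}$. *)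

theory Defs
  imports "HOL-Probability.Probability"
begin

type_synonym bits = "bool list"
type_synonym pop = "bool list list"

definition oneminmax :: "bits \<Rightarrow> real \<times> real" where
  "oneminmax x = (real (length x - count_list x True), real (count_list x True))"

definition sdom :: "real \<times> real \<Rightarrow> real \<times> real \<Rightarrow> bool" where
  "sdom a b \<longleftrightarrow> fst a \<ge> fst b \<and> snd a \<ge> snd b \<and> (fst a > fst b \<or> snd a > snd b)"

section \<open>Non-dominated sorting (individuals of R are identified by their index)\<close>

definition nondom_set :: "(bits \<Rightarrow> real \<times> real) \<Rightarrow> pop \<Rightarrow> nat set \<Rightarrow> nat set" where
  "nondom_set f R S = {x \<in> S. \<not> (\<exists>y\<in>S. sdom (f (R ! y)) (f (R ! x)))}"

text \<open>remaining f R k = R minus F_1,...,F_k\<close>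
fun remaining :: "(bits \<Rightarrow> real \<times> real) \<Rightarrow> pop \<Rightarrow> nat \<Rightarrow> nat set" where
  "remaining f R 0 = {..<length R}"
| "remaining f R (Suc k) = remaining f R k - nondom_set f R (remaining f R k)"

text \<open>front f R k is the front F_(k+1) of the paper (0-based here).\<close>
definition front :: "(bits \<Rightarrow> real \<times> real) \<Rightarrow> pop \<Rightarrow> nat \<Rightarrow> nat set" where
  "front f R k = nondom_set f R (remaining f R k)"

text \<open>critical front index (0-based i* - 1): least j with |F_1 u ... u F_(j+1)| >= N\<close>
definition crit :: "(bits \<Rightarrow> real \<times> real) \<Rightarrow> pop \<Rightarrow> nat \<Rightarrow> nat" where
  "crit f R N = (LEAST j. N \<le> card ({..<length R} - remaining f R (Suc j)))"

definition objv :: "(bits \<Rightarrow> real \<times> real) \<Rightarrow> nat \<Rightarrow> bits \<Rightarrow> real" where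
  "objv f i x = (if i = 1 then fst (f x) else snd (f x))"

definition cd_obj :: "(nat \<Rightarrow> real) \<Rightarrow> nat list \<Rightarrow> nat \<Rightarrow> ereal" where
  "cd_obj g xs x = (let k = (LEAST k. k < length xs \<and> xs ! k = x); m = length xs in
     if k = 0 \<or> k = m - 1 then \<infinity>
     else if g (xs ! (m - 1)) = g (xs ! 0) then 0
     else ereal ((g (xs ! (k + 1)) - g (xs ! (k - 1))) / (g (xs ! (m - 1)) - g (xs ! 0))))"

text \<open>A tie-breaking rule for the sorting inside the crowding-distance computation:
  given the iteration t, the combined population R, a front S and an objective i,
  it returns a sorting of S in ascending f_i value (ties broken arbitrarily).\<close>
type_synonym tiebreak = "nat \<Rightarrow> pop \<Rightarrow> nat set \<Rightarrow> nat \<Rightarrow> nat list"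

definition valid_tiebreak :: "(bits \<Rightarrow> real \<times> real) \<Rightarrow> tiebreak \<Rightarrow> bool" where
  "valid_tiebreak f tb \<longleftrightarrow> (\<forall>t R S i. finite S \<and> i \<in> {1, 2} \<longrightarrow>
      distinct (tb t R S i) \<and> set (tb t R S i) = S \<and>
      sorted_wrt (\<lambda>a b. objv f i (R ! a) \<le> objv f i (R ! b)) (tb t R S i))"

definition cdis :: "(bits \<Rightarrow> real \<times> real) \<Rightarrow> tiebreak \<Rightarrow> nat \<Rightarrow> pop \<Rightarrow> nat set \<Rightarrow> nat \<Rightarrow> ereal" where
  "cdis f tb t R S x =
     cd_obj (\<lambda>j. objv f 1 (R ! j)) (tb t R S 1) x + cd_obj (\<lambda>j. objv f 2 (R ! j)) (tb t R S 2) x"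

text \<open>All admissible index sets of the next population: F_1 u ... u F_(i*-1) together with
  N - |F_1 u ... u F_(i*-1)| individuals of F_(i*) of largest crowding distance.
  Choosing uniformly among these sets = breaking ties uniformly at random.\<close>
definition survivor_sets :: "(bits \<Rightarrow> real \<times> real) \<Rightarrow> nat \<Rightarrow> tiebreak \<Rightarrow> nat \<Rightarrow> pop \<Rightarrow> nat set set" where
  "survivor_sets f N tb t R =
     (let j = crit f R N; Fj = front f R j; keep = {..<length R} - remaining f R j;
          k = N - card keep
      in {keep \<union> A | A. A \<subseteq> Fj \<and> card A = k \<and>
            (\<forall>x\<in>A. \<forall>y\<in>Fj - A. cdis f tb t R Fj y \<le> cdis f tb t R Fj x)})"

fun indep_list :: "('a \<Rightarrow> 'b pmf) \<Rightarrow> 'a list \<Rightarrow> 'b list pmf" where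
  "indep_list g [] = return_pmf []"
| "indep_list g (x # xs) = bind_pmf (g x) (\<lambda>y. map_pmf (\<lambda>ys. y # ys) (indep_list g xs))"

definition one_bit_mut :: "bits \<Rightarrow> bits pmf" where
  "one_bit_mut x = map_pmf (\<lambda>i. x[i := \<not> x ! i]) (pmf_of_set {..<length x})"

definition bitwise_mut :: "bits \<Rightarrow> bits pmf" where
  "bitwise_mut x = indep_list
     (\<lambda>b. map_pmf (\<lambda>c. if c then \<not> b else b) (bernoulli_pmf (1 / real (length x)))) x"

definition uniform_parent :: "pop \<Rightarrow> bits pmf" where
  "uniform_parent P = map_pmf (\<lambda>i. P ! i) (pmf_of_set {..<length P})"

datatype offspring_mode = OneBitEach | BitwiseEach | OneBitRandom | BitwiseRandom

fun offspring :: "offspring_mode \<Rightarrow> pop \<Rightarrow> pop pmf" where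
  "offspring OneBitEach P = indep_list one_bit_mut P"
| "offspring BitwiseEach P = indep_list bitwise_mut P"
| "offspring OneBitRandom P =
     indep_list (\<lambda>_. bind_pmf (uniform_parent P) one_bit_mut) [0..<length P]"
| "offspring BitwiseRandom P =
     indep_list (\<lambda>_. bind_pmf (uniform_parent P) bitwise_mut) [0..<length P]"

definition random_bits :: "nat \<Rightarrow> bits pmf" where
  "random_bits n = pmf_of_set {x :: bool list. length x = n}"

definition init_pop :: "nat \<Rightarrow> nat \<Rightarrow> pop pmf" where
  "init_pop n N = indep_list (\<lambda>_. random_bits n) [0..<N]"

definition nsga2_step ::
  "offspring_mode \<Rightarrow> (bits \<Rightarrow> real \<times> real) \<Rightarrow> nat \<Rightarrow> tiebreak \<Rightarrow> nat \<Rightarrow> pop \<Rightarrow> pop pmf" where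
  "nsga2_step mode f N tb t P =
     bind_pmf (offspring mode P) (\<lambda>Q.
       bind_pmf (pmf_of_set (survivor_sets f N tb t (P @ Q))) (\<lambda>A.
         return_pmf (map (\<lambda>i. (P @ Q) ! i) (sorted_list_of_set A))))"

text \<open>Joint distribution of the history [P_0, ..., P_t].\<close>
fun nsga2_hist ::
  "offspring_mode \<Rightarrow> (bits \<Rightarrow> real \<times> real) \<Rightarrow> nat \<Rightarrow> nat \<Rightarrow> tiebreak \<Rightarrow> nat \<Rightarrow> pop list pmf" where
  "nsga2_hist mode f n N tb 0 = map_pmf (\<lambda>P. [P]) (init_pop n N)"
| "nsga2_hist mode f n N tb (Suc t) =
     bind_pmf (nsga2_hist mode f n N tb t)
       (\<lambda>h. map_pmf (\<lambda>P'. h @ [P']) (nsga2_step mode f N tb t (last h)))"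

definition covers_front :: "nat \<Rightarrow> pop \<Rightarrow> bool" where
  "covers_front n P \<longleftrightarrow> (\<forall>k\<le>n. (real k, real (n - k)) \<in> oneminmax ` set P)"

text \<open>For a history h = [P_0,...,P_t]: min(T, t).\<close>
definition T_trunc :: "nat \<Rightarrow> pop list \<Rightarrow> nat" where
  "T_trunc n h = (LEAST s. s = length h - 1 \<or> covers_front n (h ! s))"

text \<open>E[T] = sup_t E[min(T,t)] (monotone convergence; T may be infinite).\<close>
definition expected_T :: "offspring_mode \<Rightarrow> nat \<Rightarrow> nat \<Rightarrow> tiebreak \<Rightarrow> ennreal" where
  "expected_T mode n N tb =
     (SUP t. \<integral>\<^sup>+ h. ennreal (real (T_trunc n h)) \<partial>measure_pmf (nsga2_hist mode oneminmax n N tb t))"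

text \<open>Pr[T >= m] = Pr[none of P_0,...,P_(m-1) covers the Pareto front].\<close>
definition prob_T_ge :: "offspring_mode \<Rightarrow> nat \<Rightarrow> nat \<Rightarrow> tiebreak \<Rightarrow> nat \<Rightarrow> real" where
  "prob_T_ge mode n N tb m =
     measure_pmf.prob (nsga2_hist mode oneminmax n N tb m) {h. \<forall>s<m. \<not> covers_front n (h ! s)}"

end

theory Submission
  imports Defs
begin


lemma sorted_le:
  assumes "sorted_wrt (\<lambda>a b. g a \<le> (g b::real)) xs" "i \<le> j" "j < length xs"
  shows "g (xs!i) \<le> g (xs!j)"
  using assms sorted_wrt_nth_less[OF assms(1), of i j] by (cases "i = j") auto

lemma least_idx:
  assumes "distinct xs" "k < length xs"
  shows "(LEAST i. i < length xs \<and> xs!i = xs!k) = k"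
  using assms by (intro Least_equality) (auto simp: nth_eq_iff_index_eq)

lemma cd_obj_at:
  assumes "distinct xs" "k < length xs"
  shows "cd_obj g xs (xs!k) = (if k = 0 \<or> k = length xs - 1 then \<infinity>
     else if g (xs ! (length xs - 1)) = g (xs ! 0) then 0
     else ereal ((g (xs ! (k + 1)) - g (xs ! (k - 1))) / (g (xs ! (length xs - 1)) - g (xs ! 0))))"
  unfolding cd_obj_def Let_def least_idx[OF assms] by simp

lemma cd_nonneg:
  assumes "sorted_wrt (\<lambda>a b. g a \<le> (g b::real)) xs" "distinct xs" "k < length xs"
  shows "cd_obj g xs (xs!k) \<ge> 0"
proof -
  consider "k = 0 \<or> k = length xs - 1" | "k \<noteq> 0" "k \<noteq> length xs - 1" by blast
  then show ?thesis
  proof cases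
    case 1 then show ?thesis using cd_obj_at[OF assms(2,3)] by simp
  next
    case 2
    have a: "g (xs!(k-1)) \<le> g (xs!(k+1))" using 2 assms by (intro sorted_le) auto
    have b: "g (xs!0) \<le> g (xs!(length xs - 1))" using 2 assms by (intro sorted_le) auto
    show ?thesis using cd_obj_at[OF assms(2,3)] a b 2 by simp
  qed
qed

lemma cd_pos:
  assumes "distinct xs" "k < length xs" "cd_obj g xs (xs!k) > 0"
    and "sorted_wrt (\<lambda>a b. g a \<le> (g b::real)) xs"
  shows "k = 0 \<or> k = length xs - 1 \<or> g (xs!(k-1)) < g (xs!(k+1))"
proof (rule ccontr)
  assume c: "\<not> ?thesis"
  have a: "g (xs!(k-1)) \<le> g (xs!(k+1))" using c assms by (intro sorted_le) auto
  with c have "g (xs!(k-1)) = g (xs!(k+1))" by auto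
  then show False using assms(3) c cd_obj_at[OF assms(1,2), of g] by (auto split: if_splits)
qed

lemma card_pos_cd:
  assumes s: "sorted_wrt (\<lambda>a b. g a \<le> (g b::real)) xs" and d: "distinct xs"
    and v: "\<forall>x\<in>set xs. \<exists>v\<le>n. g x = real v"
  shows "card {x \<in> set xs. cd_obj g xs x > 0} \<le> 2*n + 2"
proof -
  define m where "m = length xs"
  define J where "J = {j. 1 \<le> j \<and> j < m \<and> g (xs!(j-1)) < g (xs!j)}"
  define K where "K = {0, m-1} \<union> J \<union> (\<lambda>j. j - 1) ` J"
  have sub: "{x \<in> set xs. cd_obj g xs x > 0} \<subseteq> (\<lambda>k. xs!k) ` K"
  proof
    fix x assume "x \<in> {x \<in> set xs. cd_obj g xs x > 0}"
    then obtain k where k: "k < m" "x = xs!k" "cd_obj g xs (xs!k) > 0"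
      by (auto simp: in_set_conv_nth m_def)
    from cd_pos[OF d k(1)[unfolded m_def] k(3) s]
    have "k = 0 \<or> k = m - 1 \<or> g (xs!(k-1)) < g (xs!(k+1))" by (simp add: m_def)
    then have "k \<in> K"
    proof (elim disjE)
      assume h: "g (xs!(k-1)) < g (xs!(k+1))"
      show "k \<in> K"
      proof (cases "g (xs!(k-1)) < g (xs!k)")
        case True
        then have "k \<noteq> 0" by (cases k) auto
        then show ?thesis using True k(1) by (auto simp: K_def J_def)
      next
        case False
        then have "g (xs!k) < g (xs!(k+1))" using h by auto
        show ?thesis
        proof (cases "k + 1 < m")
          case False
          then have "k = m - 1" using k(1) by simp
          then show ?thesis by (simp add: K_def)
        next
          case True
          with \<open>g (xs!k) < g (xs!(k+1))\<close> have "k+1 \<in> J" by (auto simp: J_def)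
          then show ?thesis unfolding K_def by (metis UnI2 add_diff_cancel_right' image_eqI)
        qed
      qed
    qed (auto simp: K_def)
    then show "x \<in> (\<lambda>k. xs!k) ` K" using k by auto
  qed
  have "J \<subseteq> {..<m}" by (auto simp: J_def)
  then have fJ: "finite J" by (rule finite_subset) simp
  have inj: "inj_on (\<lambda>j. g (xs!j)) J"
  proof (rule inj_onI)
    fix i j assume ij: "i \<in> J" "j \<in> J" "g (xs!i) = g (xs!j)"
    show "i = j"
    proof (rule ccontr)
      assume "i \<noteq> j"
      then consider "i < j" | "j < i" by linarith
      then show False
      proof cases
        case 1
        have "g (xs!i) \<le> g (xs!(j-1))" using 1 ij s by (intro sorted_le) (auto simp: J_def m_def)
        then show False using ij by (auto simp: J_def)
      next
        case 2
        have "g (xs!j) \<le> g (xs!(i-1))" using 2 ij s by (intro sorted_le) (auto simp: J_def m_def)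
        then show False using ij by (auto simp: J_def)
      qed
    qed
  qed
  have img: "(\<lambda>j. g (xs!j)) ` J \<subseteq> real ` {1..n}"
  proof
    fix y assume "y \<in> (\<lambda>j. g (xs!j)) ` J"
    then obtain j where j: "j \<in> J" "y = g (xs!j)" by auto
    have "xs!j \<in> set xs" "xs!(j-1) \<in> set xs" using j by (auto simp: J_def m_def)
    then obtain v w where "v \<le> n" "g (xs!j) = real v" "g (xs!(j-1)) = real w"
      using v by metis
    moreover have "g (xs!(j-1)) < g (xs!j)" using j by (auto simp: J_def)
    ultimately show "y \<in> real ` {1..n}" using j by auto
  qed
  have cJ: "card J \<le> n"
    using card_inj_on_le[OF inj img] by (simp add: card_image)
  have "card K \<le> card {0, m-1} + card J + card ((\<lambda>j. j - 1) ` J)"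
    unfolding K_def by (meson card_Un_le le_trans add_le_mono order_refl)
  also have "\<dots> \<le> 2 + n + n"
    using cJ card_image_le[OF fJ, of "\<lambda>j. j - 1"] card_insert_le_m1
    by (intro add_mono) (auto simp: card_insert_if)
  finally have cK: "card K \<le> 2*n+2" by simp
  have fK: "finite K" using fJ by (simp add: K_def)
  have "card {x \<in> set xs. cd_obj g xs x > 0} \<le> card ((\<lambda>k. xs!k) ` K)"
    by (rule card_mono[OF _ sub]) (use fK in simp)
  also have "\<dots> \<le> card K" by (rule card_image_le[OF fK])
  finally show ?thesis using cK by simp
qed


definition cnt :: "bits \<Rightarrow> nat" where "cnt x = count_list x True"

lemma no_sdom: "length x = length y \<Longrightarrow> \<not> sdom (oneminmax x) (oneminmax y)"
  unfolding sdom_def oneminmax_def using count_le_length[of x True] count_le_length[of y True]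
  by auto

lemma nondom_all:
  assumes "\<forall>x\<in>set R. length x = n"
  shows "nondom_set oneminmax R {..<length R} = {..<length R}"
  unfolding nondom_set_def using assms no_sdom by auto

lemma remaining1:
  assumes "\<forall>x\<in>set R. length x = n"
  shows "remaining oneminmax R (Suc 0) = {}"
  using nondom_all[OF assms] by simp

lemma crit0:
  assumes "\<forall>x\<in>set R. length x = n" "N \<le> length R"
  shows "crit oneminmax R N = 0"
proof -
  have "remaining oneminmax R (Suc 0) = {}" by (rule remaining1[OF assms(1)])
  then show ?thesis unfolding crit_def using assms(2) by (intro Least_equality) (auto simp: nondom_all[OF assms(1)])
qed

lemma front0:
  assumes "\<forall>x\<in>set R. length x = n"
  shows "front oneminmax R 0 = {..<length R}"
  unfolding front_def using nondom_all[OF assms] by simp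

lemma surv_eq:
  assumes "\<forall>x\<in>set R. length x = n" "N \<le> length R"
  shows "survivor_sets oneminmax N tb t R = {A. A \<subseteq> {..<length R} \<and> card A = N \<and>
     (\<forall>x\<in>A. \<forall>y\<in>{..<length R} - A. cdis oneminmax tb t R {..<length R} y \<le> cdis oneminmax tb t R {..<length R} x)}"
  unfolding survivor_sets_def Let_def crit0[OF assms] front0[OF assms(1)] by auto

lemma top_exists:
  fixes h :: "'a \<Rightarrow> 'b::linorder"
  assumes "finite S" "k \<le> card S"
  shows "\<exists>A\<subseteq>S. card A = k \<and> (\<forall>x\<in>A. \<forall>y\<in>S-A. h y \<le> h x)"
  using assms(2)
proof (induction k)
  case 0 then show ?case by (intro exI[of _ "{}"]) auto
next
  case (Suc k)
  then obtain A where A: "A \<subseteq> S" "card A = k" "\<forall>x\<in>A. \<forall>y\<in>S-A. h y \<le> h x" by auto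
  have fA: "finite A" using A(1) assms(1) finite_subset by blast
  have "card A < card S" using A Suc by simp
  then have ne: "S - A \<noteq> {}"
  proof (intro notI)
    assume "S - A = {}" then have "S \<subseteq> A" by blast
    then have "card S \<le> card A" using card_mono[OF fA] by blast
    then show False using \<open>card A < card S\<close> by simp
  qed
  have fSA: "finite (S - A)" using assms(1) by simp
  have Min: "Max (h ` (S - A)) \<in> h ` (S - A)" using fSA ne by (intro Max_in) auto
  then obtain z where z1: "z \<in> S - A" "h z = Max (h ` (S - A))" by auto
  have z: "z \<in> S - A" "\<forall>y\<in>S-A. h y \<le> h z" using z1 fSA by auto
  show ?case
  proof (intro exI[of _ "insert z A"] conjI)
    show "insert z A \<subseteq> S" using z A by auto
    show "card (insert z A) = Suc k" using z A fA by simp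
    show "\<forall>x\<in>insert z A. \<forall>y\<in>S - insert z A. h y \<le> h x" using z A by auto
  qed
qed


lemma objv1: "length x = n \<Longrightarrow> objv oneminmax 1 x = real (n - cnt x)"
  by (simp add: objv_def oneminmax_def cnt_def)
lemma objv2: "objv oneminmax 2 x = real (cnt x)"
  by (simp add: objv_def oneminmax_def cnt_def)

lemma cnt_le: "cnt x \<le> length x" unfolding cnt_def by (rule count_le_length)

lemma ereal_sum_pos: "(a::ereal) + b > 0 \<Longrightarrow> a > 0 \<or> b > 0"
  by (metis add_nonpos_nonpos not_less)

context
  fixes R :: pop and n :: nat and tb :: tiebreak and t :: nat
  assumes len: "\<forall>x\<in>set R. length x = n" and vt: "valid_tiebreak oneminmax tb"
begin

abbreviation "cS \<equiv> {..<length R}"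
abbreviation "cxs i \<equiv> tb t R cS i"
abbreviation "cg i \<equiv> (\<lambda>j. objv oneminmax i (R ! j))"

lemma tbp:
  assumes "i \<in> {1,2}"
  shows "distinct (cxs i)" "set (cxs i) = cS" "sorted_wrt (\<lambda>a b. cg i a \<le> cg i b) (cxs i)"
  using vt assms unfolding valid_tiebreak_def by blast+

lemma gvals: "i \<in> {1,2} \<Longrightarrow> \<forall>x\<in>set (cxs i). \<exists>v\<le>n. cg i x = real v"
proof
  fix x assume i: "i \<in> {1,2}" and x: "x \<in> set (cxs i)"
  then have "x < length R" using tbp(2)[OF i] by auto
  then have l: "length (R!x) = n" using len by auto
  show "\<exists>v\<le>n. cg i x = real v"
  proof (cases "i = 1")
    case True then show ?thesis using objv1[OF l] by auto
  next
    case False then have "i = 2" using i by auto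
    then show ?thesis using objv2 cnt_le l by auto
  qed
qed

lemma cdis_def': "cdis oneminmax tb t R cS j = cd_obj (cg 1) (cxs 1) j + cd_obj (cg 2) (cxs 2) j"
  unfolding cdis_def by simp

lemma card_pos: "card {j \<in> cS. cdis oneminmax tb t R cS j > 0} \<le> 4*n + 4"
proof -
  have sub: "{j \<in> cS. cdis oneminmax tb t R cS j > 0} \<subseteq>
    {x \<in> set (cxs 1). cd_obj (cg 1) (cxs 1) x > 0} \<union> {x \<in> set (cxs 2). cd_obj (cg 2) (cxs 2) x > 0}"
    using tbp(2)[of 1] tbp(2)[of 2] ereal_sum_pos unfolding cdis_def' by auto
  have c1: "card {x \<in> set (cxs 1). cd_obj (cg 1) (cxs 1) x > 0} \<le> 2*n+2"
    using card_pos_cd[OF tbp(3) tbp(1) gvals] by simp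
  have c2: "card {x \<in> set (cxs 2). cd_obj (cg 2) (cxs 2) x > 0} \<le> 2*n+2"
    using card_pos_cd[OF tbp(3) tbp(1) gvals] by simp
  have "card {j \<in> cS. cdis oneminmax tb t R cS j > 0} \<le>
     card ({x \<in> set (cxs 1). cd_obj (cg 1) (cxs 1) x > 0} \<union> {x \<in> set (cxs 2). cd_obj (cg 2) (cxs 2) x > 0})"
    by (rule card_mono[OF _ sub]) simp
  also have "\<dots> \<le> 2*n+2 + (2*n+2)" using card_Un_le c1 c2 by (meson add_mono le_trans)
  finally show ?thesis by simp
qed

lemma cd_nonneg_all: "i \<in> {1,2} \<Longrightarrow> j \<in> cS \<Longrightarrow> cd_obj (cg i) (cxs i) j \<ge> 0"
proof -
  assume i: "i \<in> {1,2}" and j: "j \<in> cS"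
  then obtain k where k: "k < length (cxs i)" "j = cxs i ! k" using tbp(2)[OF i] by (metis in_set_conv_nth)
  show ?thesis using cd_nonneg[OF tbp(3)[OF i] tbp(1)[OF i] k(1)] k by simp
qed

lemma pos_value:
  assumes i0: "i0 < length R"
  shows "\<exists>j<length R. cnt (R!j) = cnt (R!i0) \<and> cdis oneminmax tb t R cS j > 0"
proof -
  define v where "v = cnt (R!i0)"
  define ys where "ys = cxs 2"
  define m where "m = length ys"
  have d: "distinct ys" and st: "set ys = cS" and so: "sorted_wrt (\<lambda>a b. cg 2 a \<le> cg 2 b) ys"
    using tbp[of 2] by (auto simp: ys_def)
  define Kv where "Kv = {k. k < m \<and> cg 2 (ys!k) = real v}"
  have fK: "finite Kv" by (auto simp: Kv_def)
  obtain k0 where "k0 < m" "ys!k0 = i0" using st i0 by (metis in_set_conv_nth lessThan_iff m_def)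
  then have "k0 \<in> Kv" by (simp add: Kv_def objv2 v_def)
  then have neK: "Kv \<noteq> {}" by auto
  define k where "k = Max Kv"
  have kK: "k \<in> Kv" using Max_in[OF fK neK] by (simp add: k_def)
  have kmax: "\<And>k'. k' \<in> Kv \<Longrightarrow> k' \<le> k" using Max_ge[OF fK] by (simp add: k_def)
  have km: "k < m" and gk: "cg 2 (ys!k) = real v" using kK by (auto simp: Kv_def)
  define j where "j = ys!k"
  have "ys!k \<in> set ys" using km unfolding m_def by (rule nth_mem)
  then have jS: "j < length R" using st unfolding j_def by blast
  have cj: "cnt (R!j) = v" using gk by (simp add: objv2 j_def)
  have pos2: "cd_obj (cg 2) ys j > 0"
  proof (cases "k = 0 \<or> k = m - 1")
    case True then show ?thesis using cd_obj_at[OF d km[unfolded m_def], of "cg 2"] by (auto simp: j_def m_def)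
  next
    case False
    have k1: "k + 1 < m" using False km by auto
    have "cg 2 (ys!k) \<le> cg 2 (ys!(k+1))" using so k1 by (intro sorted_le) (auto simp: m_def)
    moreover have "cg 2 (ys!(k+1)) \<noteq> real v" using kmax[of "k+1"] k1 by (auto simp: Kv_def)
    ultimately have up: "cg 2 (ys!k) < cg 2 (ys!(k+1))" using gk by auto
    have lo: "cg 2 (ys!(k-1)) \<le> cg 2 (ys!k)" using so km by (intro sorted_le) (auto simp: m_def)
    have a: "cg 2 (ys!0) \<le> cg 2 (ys!(k-1))" using so km by (intro sorted_le) (auto simp: m_def)
    have b: "cg 2 (ys!(k+1)) \<le> cg 2 (ys!(m-1))" using so k1 by (intro sorted_le) (auto simp: m_def)
    have "cg 2 (ys!(m-1)) - cg 2 (ys!0) > 0" using a b up lo by linarith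
    moreover have "cg 2 (ys!(k+1)) - cg 2 (ys!(k-1)) > 0" using up lo by linarith
    ultimately show ?thesis using cd_obj_at[OF d km[unfolded m_def], of "cg 2"] False
      by (auto simp: j_def m_def)
  qed
  have "cd_obj (cg 1) (cxs 1) j \<ge> 0" using cd_nonneg_all[of 1 j] jS by simp
  then have "cdis oneminmax tb t R cS j > 0" using pos2 unfolding cdis_def' ys_def
    by (metis add_nonneg_pos add.commute)
  then show ?thesis using jS cj v_def by blast
qed

end



lemma survival:
  assumes len: "\<forall>x\<in>set R. length x = n" and vt: "valid_tiebreak oneminmax tb"
    and lR: "length R = 2*N" and N: "N \<ge> 4*(n+1)"
  shows "survivor_sets oneminmax N tb t R \<noteq> {}" "finite (survivor_sets oneminmax N tb t R)"
    and "A \<in> survivor_sets oneminmax N tb t R \<Longrightarrow> A \<subseteq> {..<length R} \<and> card A = N \<and>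
          (\<forall>i0<length R. \<exists>j\<in>A. cnt (R!j) = cnt (R!i0))"
proof -
  have NR: "N \<le> length R" using lR by simp
  note se = surv_eq[OF len NR, of tb t]
  define cd where "cd = cdis oneminmax tb t R {..<length R}"
  have "\<exists>A\<subseteq>{..<length R}. card A = N \<and> (\<forall>x\<in>A. \<forall>y\<in>{..<length R}-A. cd y \<le> cd x)"
    using NR by (intro top_exists) auto
  then show "survivor_sets oneminmax N tb t R \<noteq> {}" unfolding se cd_def by auto
  show "finite (survivor_sets oneminmax N tb t R)" unfolding se
    by (rule finite_subset[of _ "Pow {..<length R}"]) auto
  assume A: "A \<in> survivor_sets oneminmax N tb t R"
  then have A1: "A \<subseteq> {..<length R}" "card A = N" "\<forall>x\<in>A. \<forall>y\<in>{..<length R}-A. cd y \<le> cd x"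
    unfolding se cd_def by auto
  have fA: "finite A" using A1(1) finite_subset by blast
  have "\<forall>i0<length R. \<exists>j\<in>A. cnt (R!j) = cnt (R!i0)"
  proof (intro allI impI)
    fix i0 assume i0: "i0 < length R"
    obtain j where j: "j < length R" "cnt (R!j) = cnt (R!i0)" "cd j > 0"
      using pos_value[OF len vt i0, of t] unfolding cd_def by blast
    show "\<exists>j\<in>A. cnt (R!j) = cnt (R!i0)"
    proof (cases "j \<in> A")
      case True then show ?thesis using j by blast
    next
      case False
      have sub: "insert j A \<subseteq> {j' \<in> {..<length R}. cd j' > 0}"
      proof
        fix x assume x: "x \<in> insert j A"
        show "x \<in> {j' \<in> {..<length R}. cd j' > 0}"
        proof (cases "x = j")
          case True then show ?thesis using j by simp
        next
          case False
          then have xA: "x \<in> A" using x by simp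
          have "j \<in> {..<length R} - A" using j \<open>j \<notin> A\<close> by simp
          then have "cd j \<le> cd x" using A1(3) xA by blast
          then have "cd x > 0" using j(3) by (rule less_le_trans[rotated])
          then show ?thesis using xA A1(1) by blast
        qed
      qed
      have "N + 1 = card (insert j A)" using False fA A1 by simp
      also have "\<dots> \<le> card {j' \<in> {..<length R}. cd j' > 0}"
        by (rule card_mono[OF _ sub]) auto
      also have "\<dots> \<le> 4*n+4" using card_pos[OF len vt, of t] unfolding cd_def by simp
      finally show ?thesis using N by simp
    qed
  qed
  then show "A \<subseteq> {..<length R} \<and> card A = N \<and> (\<forall>i0<length R. \<exists>j\<in>A. cnt (R!j) = cnt (R!i0))"
    using A1 by blast
qed


lemma measure_bind_pmf:
  "measure (measure_pmf (bind_pmf M f)) X = (\<integral>x. measure (measure_pmf (f x)) X \<partial>measure_pmf M)"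
proof -
  have int: "integrable (measure_pmf M) (\<lambda>x. measure (measure_pmf (f x)) X)"
    by (rule measure_pmf.integrable_const_bound[where B=1]) auto
  have "measure (measure_pmf (bind_pmf M f)) X = enn2real (emeasure (measure_pmf (bind_pmf M f)) X)"
    by (simp add: measure_def)
  also have "\<dots> = enn2real (\<integral>\<^sup>+x. emeasure (measure_pmf (f x)) X \<partial>measure_pmf M)"
    by (subst emeasure_bind_pmf) (rule refl)
  also have "\<dots> = enn2real (\<integral>\<^sup>+x. ennreal (measure (measure_pmf (f x)) X) \<partial>measure_pmf M)"
    by (simp add: measure_pmf.emeasure_eq_measure)
  also have "\<dots> = (\<integral>x. measure (measure_pmf (f x)) X \<partial>measure_pmf M)"
    by (subst nn_integral_eq_integral[OF int]) auto
  finally show ?thesis .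
qed


lemma indep_list_set:
  "ys \<in> set_pmf (indep_list g xs) \<Longrightarrow> length ys = length xs \<and> (\<forall>i<length xs. ys!i \<in> set_pmf (g (xs!i)))"
proof (induction xs arbitrary: ys)
  case Nil then show ?case by simp
next
  case (Cons x xs)
  then obtain y zs where ys: "ys = y # zs" "y \<in> set_pmf (g x)" "zs \<in> set_pmf (indep_list g xs)" by auto
  show ?case using Cons.IH[OF ys(3)] ys by (auto simp: nth_Cons split: nat.split)
qed

lemma integral_if_const:
  "(\<integral>y. (if y \<in> E then 0 else (c::real)) \<partial>measure_pmf M) = c * (1 - measure (measure_pmf M) E)"
proof -
  have "(\<lambda>y. if y \<in> E then 0 else c) = (\<lambda>y. c * indicator (-E) y)" by (auto simp: indicator_def)
  then have "(\<integral>y. (if y \<in> E then 0 else c) \<partial>measure_pmf M) = c * measure (measure_pmf M) (-E)"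
    by simp
  also have "measure (measure_pmf M) (-E) = 1 - measure (measure_pmf M) E"
    using measure_pmf.prob_compl[of E M] by (simp add: Compl_eq_Diff_UNIV)
  finally show ?thesis .
qed

lemma indep_list_none:
  "measure (measure_pmf (indep_list g xs)) {ys. \<forall>y\<in>set ys. y \<notin> E} = (\<Prod>x\<leftarrow>xs. 1 - measure (measure_pmf (g x)) E)"
proof (induction xs)
  case Nil then show ?case by simp
next
  case (Cons x xs)
  define F where "F = {ys. \<forall>y\<in>set ys. y \<notin> E}"
  have pre: "\<And>y. (Cons y -` F) = (if y \<in> E then {} else F)" by (auto simp: F_def)
  have "measure (measure_pmf (indep_list g (x # xs))) F =
    (\<integral>y. measure (measure_pmf (map_pmf (Cons y) (indep_list g xs))) F \<partial>measure_pmf (g x))"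
    by (simp add: measure_bind_pmf)
  also have "\<dots> = (\<integral>y. (if y \<in> E then 0 else measure (measure_pmf (indep_list g xs)) F) \<partial>measure_pmf (g x))"
    by (intro Bochner_Integration.integral_cong) (auto simp: pre)
  also have "\<dots> = measure (measure_pmf (indep_list g xs)) F * (1 - measure (measure_pmf (g x)) E)"
    by (rule integral_if_const)
  finally show ?case using Cons.IH by (simp add: F_def mult.commute)
qed

lemma integral_if_eq:
  "(\<integral>y. (if z = y then (c::real) else 0) \<partial>measure_pmf M) = pmf M z * c"
proof -
  have "(\<lambda>y. if z = y then c else 0) = (\<lambda>y. c * indicator {z} y)" by (auto simp: indicator_def)
  then show ?thesis by (simp add: measure_pmf_single mult.commute)
qed

lemma indep_list_pmf:
  "pmf (indep_list g xs) ys = (if length ys = length xs then (\<Prod>i<length xs. pmf (g (xs!i)) (ys!i)) else 0)"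
proof (induction xs arbitrary: ys)
  case Nil then show ?case by (cases ys) (auto simp: pmf_return)
next
  case (Cons x xs)
  show ?case
  proof (cases ys)
    case Nil
    have "pmf (indep_list g (x # xs)) [] = 0"
      by (auto simp: pmf_bind pmf_eq_0_set_pmf intro!: integral_eq_zero_AE)
    then show ?thesis using Nil by simp
  next
    case (Cons z zs)
    have m: "\<And>y. pmf (map_pmf (Cons y) (indep_list g xs)) (z # zs) = (if z = y then pmf (indep_list g xs) zs else 0)"
    proof -
      fix y show "pmf (map_pmf (Cons y) (indep_list g xs)) (z # zs) = (if z = y then pmf (indep_list g xs) zs else 0)"
      proof (cases "z = y")
        case True then show ?thesis using pmf_map_inj'[of "Cons y" "indep_list g xs" zs] by (simp add: inj_def)
      next
        case False then show ?thesis by (auto simp: pmf_eq_0_set_pmf)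
      qed
    qed
    have "pmf (indep_list g (x # xs)) ys = pmf (g x) z * pmf (indep_list g xs) zs"
      using Cons by (simp add: pmf_bind m integral_if_eq)
    then show ?thesis using Cons.IH[of zs] \<open>ys = z # zs\<close>
      by (simp add: prod.lessThan_Suc_shift del: prod.lessThan_Suc)
  qed
qed


definition flipset :: "bits \<Rightarrow> bool \<Rightarrow> bits set" where
  "flipset x b = (\<lambda>j. x[j := \<not> x!j]) ` {j. j < length x \<and> x!j = b}"

lemma cnt_card: "cnt x = card {j. j < length x \<and> x!j = True}"
  unfolding cnt_def count_list_eq_length_filter length_filter_conv_card by (simp add: eq_commute)

lemma card_false: "card {j. j < length x \<and> x!j = False} = length x - cnt x"
proof -
  have "{j. j < length x \<and> x!j = False} = {..<length x} - {j. j < length x \<and> x!j = True}" by auto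
  then show ?thesis by (simp only:) (subst card_Diff_subset, auto simp: cnt_card)
qed

lemma cnt_upd:
  assumes "j < length x"
  shows "cnt (x[j := v]) + (if x!j then 1 else 0) = cnt x + (if v then 1 else 0)"
proof -
  have x: "x = take j x @ x!j # drop (Suc j) x" using assms by (simp add: id_take_nth_drop)
  have u: "x[j := v] = take j x @ v # drop (Suc j) x" using assms by (simp add: upd_conv_take_nth_drop)
  show ?thesis unfolding cnt_def by (subst (2) x, subst u) simp
qed

lemma flipset_up: "flipset x False \<subseteq> {y. cnt y = cnt x + 1}"
  unfolding flipset_def using cnt_upd by fastforce

lemma flipset_down: "flipset x True \<subseteq> {y. cnt y + 1 = cnt x}"
  unfolding flipset_def using cnt_upd by fastforce

lemma flip_inj: "inj_on (\<lambda>j. x[j := \<not> x!j]) {..<length x}"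
proof (rule inj_onI)
  fix i j assume ij: "i \<in> {..<length x}" "j \<in> {..<length x}" "x[i := \<not> x!i] = x[j := \<not> x!j]"
  show "i = j"
  proof (rule ccontr)
    assume "i \<noteq> j"
    have "x[i := \<not> x!i] ! i = x[j := \<not> x!j] ! i" using ij(3) by (rule arg_cong)
    moreover have "x[i := \<not> x!i] ! i = (\<not> x!i)" using ij(1) by simp
    moreover have "x[j := \<not> x!j] ! i = x!i" using ij(1) \<open>i \<noteq> j\<close> by simp
    ultimately show False by simp
  qed
qed

lemma one_bit_bound:
  assumes "length x = n" "n \<ge> 1"
  shows "measure (measure_pmf (one_bit_mut x)) (flipset x b) \<ge> card {j. j < n \<and> x!j = b} / n"
proof -
  define J where "J = {j. j < n \<and> x!j = b}"
  have sub: "J \<subseteq> {..<length x} \<inter> (\<lambda>i. x[i := \<not> x!i]) -` flipset x b"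
    using assms by (auto simp: J_def flipset_def)
  have "measure (measure_pmf (one_bit_mut x)) (flipset x b) =
        card ({..<length x} \<inter> (\<lambda>i. x[i := \<not> x!i]) -` flipset x b) / card {..<length x}"
  proof -
    have ne: "{..<length x} \<noteq> {}" using assms by (simp add: lessThan_empty_iff)
    show ?thesis unfolding one_bit_mut_def measure_map_pmf measure_pmf_of_set[OF ne finite_lessThan] ..
  qed
  moreover have "card J \<le> card ({..<length x} \<inter> (\<lambda>i. x[i := \<not> x!i]) -` flipset x b)"
    by (rule card_mono[OF _ sub]) simp
  ultimately show ?thesis using assms by (simp add: J_def divide_right_mono)
qed

lemma pmf_flipbit:
  assumes "0 \<le> p" "p \<le> 1"
  shows "pmf (map_pmf (\<lambda>c. if c then \<not> b else b) (bernoulli_pmf p)) y = (if y = b then 1 - p else p)"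
proof -
  have inj: "inj (\<lambda>c. if c then \<not> b else (b::bool))" by (auto simp: inj_def split: if_splits)
  have "y = (\<lambda>c. if c then \<not> b else b) (y \<noteq> b)" by auto
  then have "pmf (map_pmf (\<lambda>c. if c then \<not> b else b) (bernoulli_pmf p)) y = pmf (bernoulli_pmf p) (y \<noteq> b)"
    using pmf_map_inj'[OF inj, of "bernoulli_pmf p" "y \<noteq> b"] by simp
  then show ?thesis using assms by (cases "y = b") auto
qed

lemma pmf_bitwise_flip:
  assumes "length x = n" "n \<ge> 1" "j < n"
  shows "pmf (bitwise_mut x) (x[j := \<not> x!j]) = (1/n) * (1 - 1/n)^(n-1)"
proof -
  define p where "p = 1 / real n"
  have p: "0 \<le> p" "p \<le> 1" using assms by (auto simp: p_def)
  have "pmf (bitwise_mut x) (x[j := \<not> x!j]) = (\<Prod>i<length x. pmf (map_pmf (\<lambda>c. if c then \<not> x!i else x!i) (bernoulli_pmf p)) (x[j := \<not> x!j] ! i))"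
    by (simp only: bitwise_mut_def indep_list_pmf length_list_update if_True p_def assms(1) refl if_P)
  also have "\<dots> = (\<Prod>i<n. (if i = j then p else 1 - p))"
  proof (rule prod.cong)
    fix i assume "i \<in> {..<n}"
    then have i: "i < length x" using assms by simp
    show "pmf (map_pmf (\<lambda>c. if c then \<not> x!i else x!i) (bernoulli_pmf p)) (x[j := \<not> x!j] ! i) = (if i = j then p else 1 - p)"
      unfolding pmf_flipbit[OF p] using i by (cases "i = j") auto
  qed (simp add: assms)
  also have "\<dots> = p * (\<Prod>i\<in>{..<n} - {j}. (if i = j then p else 1 - p))"
    using assms by (subst prod.remove[of _ j]) auto
  also have "(\<Prod>i\<in>{..<n} - {j}. (if i = j then p else 1 - p)) = (\<Prod>i\<in>{..<n} - {j}. 1 - p)"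
    by (rule prod.cong) auto
  also have "\<dots> = (1 - p)^(n-1)" using assms by simp
  finally show ?thesis by (simp add: p_def)
qed

lemma pow_quarter:
  assumes "n \<ge> (1::nat)"
  shows "(1 - 1 / real n) ^ (n - 1) \<ge> 1/4"
proof (cases "n = 1")
  case True then show ?thesis by simp
next
  case False
  define m where "m = n - 1"
  have m: "m \<ge> 1" "n = m + 1" using assms False by (auto simp: m_def)
  have e: "(1 + 1 / real m) ^ m \<le> exp 1"
    by (rule exp_ge_one_plus_x_over_n_power_n) (use m in auto)
  have eq: "1 - 1 / real n = 1 / (1 + 1 / real m)" using m by (simp add: field_simps)
  have pos: "(1 + 1 / real m) ^ m > 0" by (intro zero_less_power) (simp add: add_pos_nonneg)
  have "(1 - 1 / real n) ^ (n - 1) = 1 / (1 + 1 / real m) ^ m"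
    by (simp add: eq m_def power_one_over)
  also have "\<dots> \<ge> 1 / exp 1" using e pos by (intro divide_left_mono) auto
  moreover have "exp (1::real) \<le> 4" using exp_le by simp
  then have "1 / exp 1 \<ge> (1/4::real)" by (simp add: field_simps)
  ultimately show ?thesis by linarith
qed

lemma bitwise_bound:
  assumes "length x = n" "n \<ge> 1"
  shows "measure (measure_pmf (bitwise_mut x)) (flipset x b) \<ge> card {j. j < n \<and> x!j = b} / (4 * n)"
proof -
  define J where "J = {j. j < n \<and> x!j = b}"
  have fJ: "finite J" by (simp add: J_def)
  have inj: "inj_on (\<lambda>j. x[j := \<not> x!j]) J"
    by (rule inj_on_subset[OF flip_inj[of x]]) (auto simp: J_def assms(1))
  have fs: "flipset x b = (\<lambda>j. x[j := \<not> x!j]) ` J" using assms by (simp add: flipset_def J_def)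
  have "measure (measure_pmf (bitwise_mut x)) (flipset x b) = (\<Sum>y\<in>flipset x b. pmf (bitwise_mut x) y)"
    using fJ fs by (simp add: measure_measure_pmf_finite)
  also have "\<dots> = (\<Sum>j\<in>J. pmf (bitwise_mut x) (x[j := \<not> x!j]))"
    unfolding fs by (rule sum.reindex[OF inj, unfolded comp_def])
  also have "\<dots> = (\<Sum>j\<in>J. (1/n) * (1 - 1/n)^(n-1))"
  proof (rule sum.cong)
    fix j assume "j \<in> J" then have "j < n" by (simp add: J_def)
    then show "pmf (bitwise_mut x) (x[j := \<not> x!j]) = (1/n) * (1 - 1/n)^(n-1)"
      by (rule pmf_bitwise_flip[OF assms])
  qed simp
  also have "\<dots> = card J * ((1/n) * (1 - 1/n)^(n-1))" by simp
  finally have eq: "measure (measure_pmf (bitwise_mut x)) (flipset x b) = card J * ((1/n) * (1 - 1/n)^(n-1))" .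
  have "(1/n) * (1/4) \<le> (1/n) * (1 - 1/real n)^(n-1)"
    by (rule mult_left_mono[OF pow_quarter[OF assms(2)]]) simp
  then have "card J * ((1/n) * (1/4)) \<le> card J * ((1/n) * (1 - 1/real n)^(n-1))"
    by (rule mult_left_mono) simp_all
  then show ?thesis unfolding eq J_def[symmetric] by (simp add: field_simps)
qed


lemma prod_list_le_elem:
  assumes "x0 \<in> set xs" "\<forall>x\<in>set xs. 0 \<le> f x \<and> f x \<le> (1::real)"
  shows "(\<Prod>x\<leftarrow>xs. f x) \<le> f x0"
  using assms
proof (induction xs)
  case Nil then show ?case by simp
next
  case (Cons a xs)
  have nn: "0 \<le> (\<Prod>x\<leftarrow>xs. f x)" using Cons.prems(2) by (induction xs) auto
  have "0 \<le> (\<Prod>x\<leftarrow>xs. f x) \<and> (\<Prod>x\<leftarrow>xs. f x) \<le> 1" using Cons.prems(2)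
    by (induction xs) (auto intro: mult_le_one)
  then have le1: "(\<Prod>x\<leftarrow>xs. f x) \<le> 1" by simp
  show ?case
  proof (cases "x0 = a")
    case True
    then show ?thesis using Cons.prems(2) nn le1 by (simp add: mult_left_le)
  next
    case False
    then have "(\<Prod>x\<leftarrow>xs. f x) \<le> f x0" using Cons by auto
    moreover have "f a * (\<Prod>x\<leftarrow>xs. f x) \<le> (\<Prod>x\<leftarrow>xs. f x)"
      using Cons.prems(2) nn by (simp add: mult_left_le_one_le)
    ultimately show ?thesis by simp
  qed
qed

lemma exists_prob:
  "measure (measure_pmf (indep_list g xs)) {ys. \<exists>y\<in>set ys. y \<in> E} = 1 - (\<Prod>x\<leftarrow>xs. 1 - measure (measure_pmf (g x)) E)"
proof -
  have "{ys. \<exists>y\<in>set ys. y \<in> E} = UNIV - {ys. \<forall>y\<in>set ys. y \<notin> E}" by auto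
  then show ?thesis using measure_pmf.prob_compl[of "{ys. \<forall>y\<in>set ys. y \<notin> E}" "indep_list g xs"]
    indep_list_none[of g xs E] by simp
qed

lemma each_bound:
  assumes "x0 \<in> set P" "measure (measure_pmf (mut x0)) E \<ge> r"
  shows "measure (measure_pmf (indep_list mut P)) {ys. \<exists>y\<in>set ys. y \<in> E} \<ge> r"
proof -
  have "(\<Prod>x\<leftarrow>P. 1 - measure (measure_pmf (mut x)) E) \<le> 1 - measure (measure_pmf (mut x0)) E"
    by (rule prod_list_le_elem[OF assms(1)]) auto
  then show ?thesis unfolding exists_prob using assms(2) by simp
qed

lemma pow_bound:
  assumes "0 \<le> q" "q \<le> (1::real)"
  shows "(1 - q)^N \<le> 1 / (1 + real N * q)"
proof -
  have b: "1 + real N * q \<le> (1 + q)^N" using Bernoulli_inequality[of q N] assms by simp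
  have "(1 - q)^N * (1 + q)^N = (1 - q^2)^N" by (simp add: power_mult_distrib[symmetric] power2_eq_square algebra_simps)
  also have "\<dots> \<le> 1" using assms by (intro power_le_one) (auto simp: power_le_one)
  finally have c: "(1 - q)^N * (1 + q)^N \<le> 1" .
  have p: "0 < 1 + real N * q" using assms by (simp add: add_pos_nonneg)
  have "(1 - q)^N * (1 + real N * q) \<le> (1 - q)^N * (1 + q)^N"
    using b assms by (intro mult_left_mono) auto
  then have "(1 - q)^N * (1 + real N * q) \<le> 1" using c by linarith
  then show ?thesis using p by (simp add: field_simps)
qed

lemma rand_bound:
  assumes x0: "x0 \<in> set P" and N: "length P = N" and r: "measure (measure_pmf (mut x0)) E \<ge> r"
    and r1: "0 \<le> r" "r \<le> 1"
  shows "measure (measure_pmf (indep_list (\<lambda>_. bind_pmf (uniform_parent P) mut) [0..<N]))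
          {ys. \<exists>y\<in>set ys. y \<in> E} \<ge> r / 2"
proof -
  obtain i0 where i0: "i0 < N" "P ! i0 = x0" using x0 N by (metis in_set_conv_nth)
  have Npos: "N \<ge> 1" using i0 by simp
  define q where "q = measure (measure_pmf (bind_pmf (uniform_parent P) mut)) E"
  have ne: "{..<length P} \<noteq> {}" using N Npos by (simp add: lessThan_empty_iff)
  have "q = (\<integral>i. measure (measure_pmf (mut (P ! i))) E \<partial>measure_pmf (pmf_of_set {..<length P}))"
    unfolding q_def uniform_parent_def bind_map_pmf measure_bind_pmf ..
  also have "\<dots> = (\<Sum>i<N. measure (measure_pmf (mut (P ! i))) E) / N"
    by (subst integral_pmf_of_set[OF ne finite_lessThan]) (simp add: N)
  finally have qeq: "q = (\<Sum>i<N. measure (measure_pmf (mut (P ! i))) E) / N" .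
  have "measure (measure_pmf (mut (P ! i0))) E \<le> (\<Sum>i<N. measure (measure_pmf (mut (P ! i))) E)"
    using i0 by (intro member_le_sum) auto
  then have Nq: "real N * q \<ge> r" using qeq r i0 Npos by (simp add: field_simps)
  have q01: "0 \<le> q" "q \<le> 1" by (auto simp: q_def)
  have "(\<Prod>x\<leftarrow>[0..<N]. 1 - q) = (1 - q)^N" by (induction N) auto
  then have eq: "measure (measure_pmf (indep_list (\<lambda>_. bind_pmf (uniform_parent P) mut) [0..<N]))
          {ys. \<exists>y\<in>set ys. y \<in> E} = 1 - (1 - q)^N"
    unfolding exists_prob q_def by simp
  have "(1 - q)^N \<le> 1 / (1 + real N * q)" by (rule pow_bound[OF q01])
  also have "\<dots> \<le> 1 / (1 + r)" using Nq r1 by (intro divide_left_mono) (auto simp: add_pos_nonneg)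
  finally have "1 - (1 - q)^N \<ge> 1 - 1 / (1 + r)" by simp
  moreover have "r * r \<le> r" using r1 by (simp add: mult_left_le_one_le)
  then have "1 - 1 / (1 + r) \<ge> r / 2" using r1 by (simp add: field_simps)
  ultimately show ?thesis unfolding eq by linarith
qed


definition vals :: "pop \<Rightarrow> nat set" where "vals P = cnt ` set P"
definition wfpop :: "nat \<Rightarrow> nat \<Rightarrow> pop \<Rightarrow> bool" where
  "wfpop n N P \<longleftrightarrow> length P = N \<and> (\<forall>x\<in>set P. length x = n)"

lemma one_bit_len: "y \<in> set_pmf (one_bit_mut x) \<Longrightarrow> length y = length x"
  unfolding one_bit_mut_def by auto

lemma bitwise_len: "y \<in> set_pmf (bitwise_mut x) \<Longrightarrow> length y = length x"
  unfolding bitwise_mut_def using indep_list_set by blast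

lemma parent_set: "P \<noteq> [] \<Longrightarrow> x \<in> set_pmf (uniform_parent P) \<Longrightarrow> x \<in> set P"
  unfolding uniform_parent_def by (auto simp: lessThan_empty_iff)

lemma offspring_support:
  assumes "wfpop n N P" "N \<ge> 1" "Q \<in> set_pmf (offspring mode P)"
  shows "wfpop n N Q"
proof -
  have ne: "P \<noteq> []" using assms(1,2) by (auto simp: wfpop_def)
  have mutlen: "\<And>y x. y \<in> set_pmf (one_bit_mut x) \<or> y \<in> set_pmf (bitwise_mut x) \<Longrightarrow> length y = length x"
    using one_bit_len bitwise_len by blast
  show ?thesis
  proof (cases mode)
    case OneBitEach
    then have "length Q = length P \<and> (\<forall>i<length P. Q!i \<in> set_pmf (one_bit_mut (P!i)))"
      using assms(3) indep_list_set by fastforce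
    then show ?thesis using assms(1) one_bit_len unfolding wfpop_def by (metis in_set_conv_nth nth_mem)
  next
    case BitwiseEach
    then have "length Q = length P \<and> (\<forall>i<length P. Q!i \<in> set_pmf (bitwise_mut (P!i)))"
      using assms(3) indep_list_set by fastforce
    then show ?thesis using assms(1) bitwise_len unfolding wfpop_def by (metis in_set_conv_nth nth_mem)
  next
    case OneBitRandom
    then have h: "length Q = length P \<and> (\<forall>i<length P. Q!i \<in> set_pmf (bind_pmf (uniform_parent P) one_bit_mut))"
      using assms(3) indep_list_set[of Q "\<lambda>_. bind_pmf (uniform_parent P) one_bit_mut" "[0..<length P]"] by auto
    have "\<forall>y\<in>set Q. length y = n"
    proof
      fix y assume "y \<in> set Q"
      then obtain i where "i < length P" "y = Q!i" using h by (metis in_set_conv_nth)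
      then obtain x where "x \<in> set_pmf (uniform_parent P)" "y \<in> set_pmf (one_bit_mut x)" using h by auto
      then show "length y = n" using parent_set[OF ne] one_bit_len assms(1) by (fastforce simp: wfpop_def)
    qed
    then show ?thesis using h assms(1) by (simp add: wfpop_def)
  next
    case BitwiseRandom
    then have h: "length Q = length P \<and> (\<forall>i<length P. Q!i \<in> set_pmf (bind_pmf (uniform_parent P) bitwise_mut))"
      using assms(3) indep_list_set[of Q "\<lambda>_. bind_pmf (uniform_parent P) bitwise_mut" "[0..<length P]"] by auto
    have "\<forall>y\<in>set Q. length y = n"
    proof
      fix y assume "y \<in> set Q"
      then obtain i where "i < length P" "y = Q!i" using h by (metis in_set_conv_nth)
      then obtain x where "x \<in> set_pmf (uniform_parent P)" "y \<in> set_pmf (bitwise_mut x)" using h by auto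
      then show "length y = n" using parent_set[OF ne] bitwise_len assms(1) by (fastforce simp: wfpop_def)
    qed
    then show ?thesis using h assms(1) by (simp add: wfpop_def)
  qed
qed


lemma K_support:
  assumes P: "wfpop n N P" and Q: "wfpop n N Q" and N: "N \<ge> 4*(n+1)" and vt: "valid_tiebreak oneminmax tb"
    and P': "P' \<in> set_pmf (bind_pmf (pmf_of_set (survivor_sets oneminmax N tb t (P @ Q)))
               (\<lambda>A. return_pmf (map (\<lambda>i. (P @ Q) ! i) (sorted_list_of_set A))))"
  shows "wfpop n N P' \<and> vals P \<union> vals Q \<subseteq> vals P'"
proof -
  define R where "R = P @ Q"
  have len: "\<forall>x\<in>set R. length x = n" using P Q by (auto simp: wfpop_def R_def)
  have lR: "length R = 2*N" using P Q by (auto simp: wfpop_def R_def)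
  note sv = survival[OF len vt lR N, where t=t]
  obtain A where A: "A \<in> survivor_sets oneminmax N tb t R" "P' = map (\<lambda>i. R ! i) (sorted_list_of_set A)"
    using P' sv(1,2) by (auto simp: R_def)
  note A3 = sv(3)[OF A(1)]
  have fA: "finite A" using A3 finite_subset by blast
  have sP': "set P' = (\<lambda>i. R!i) ` A" using A(2) fA by simp
  have "length P' = N" using A(2) A3 by simp
  moreover have "\<forall>x\<in>set P'. length x = n" using sP' A3 len by auto
  moreover have "vals R \<subseteq> vals P'"
  proof
    fix v assume "v \<in> vals R"
    then obtain i0 where "i0 < length R" "v = cnt (R!i0)" by (auto simp: vals_def in_set_conv_nth)
    then obtain j where "j \<in> A" "cnt (R!j) = v" using A3 by metis
    then show "v \<in> vals P'" using sP' by (auto simp: vals_def)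
  qed
  ultimately show ?thesis by (auto simp: wfpop_def vals_def R_def)
qed

lemma step_support:
  assumes P: "wfpop n N P" and N: "N \<ge> 4*(n+1)" and vt: "valid_tiebreak oneminmax tb"
    and P': "P' \<in> set_pmf (nsga2_step mode oneminmax N tb t P)"
  shows "wfpop n N P' \<and> vals P \<subseteq> vals P'"
proof -
  obtain Q where Q: "Q \<in> set_pmf (offspring mode P)"
    "P' \<in> set_pmf (bind_pmf (pmf_of_set (survivor_sets oneminmax N tb t (P @ Q)))
               (\<lambda>A. return_pmf (map (\<lambda>i. (P @ Q) ! i) (sorted_list_of_set A))))"
    using P' unfolding nsga2_step_def by auto
  have "wfpop n N Q" using offspring_support[OF P _ Q(1)] N by simp
  then show ?thesis using K_support[OF P _ N vt Q(2)] by blast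
qed

lemma bind_prob_ge:
  assumes "\<forall>Q\<in>set_pmf M. Q \<in> S \<longrightarrow> set_pmf (K Q) \<subseteq> X"
  shows "measure (measure_pmf M) S \<le> measure (measure_pmf (bind_pmf M K)) X"
proof -
  have int1: "integrable (measure_pmf M) (\<lambda>Q. measure (measure_pmf (K Q)) X)"
    by (rule measure_pmf.integrable_const_bound[where B=1]) auto
  have int2: "integrable (measure_pmf M) (indicator S :: _ \<Rightarrow> real)"
    by (rule measure_pmf.integrable_const_bound[where B=1]) (auto simp: indicator_def)
  have "AE Q in measure_pmf M. indicator S Q \<le> measure (measure_pmf (K Q)) X"
  proof (rule AE_pmfI)
    fix Q assume Q: "Q \<in> set_pmf M"
    show "indicator S Q \<le> measure (measure_pmf (K Q)) X"
    proof (cases "Q \<in> S")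
      case True
      then have sub: "set_pmf (K Q) \<subseteq> X" using assms Q by blast
      have "measure (measure_pmf (K Q)) (UNIV - X) = 0"
        using sub by (subst measure_pmf_zero_iff) auto
      then have "measure (measure_pmf (K Q)) X = 1"
        using measure_pmf.prob_compl[of X "K Q"] by simp
      then show ?thesis by simp
    qed simp
  qed
  then have "(\<integral>Q. indicator S Q \<partial>measure_pmf M) \<le> (\<integral>Q. measure (measure_pmf (K Q)) X \<partial>measure_pmf M)"
    by (rule integral_mono_AE[OF int2 int1])
  then show ?thesis by (simp add: measure_bind_pmf)
qed

lemma mut_bound:
  assumes "mut = one_bit_mut \<or> mut = bitwise_mut" "length x = n" "n \<ge> 1" "flipset x b \<subseteq> E"
  shows "measure (measure_pmf (mut x)) E \<ge> card {j. j < n \<and> x!j = b} / (4 * real n)"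
proof -
  have "measure (measure_pmf (mut x)) (flipset x b) \<ge> card {j. j < n \<and> x!j = b} / (4 * real n)"
  proof (cases "mut = one_bit_mut")
    case True
    have "card {j. j < n \<and> x!j = b} / (4 * real n) \<le> card {j. j < n \<and> x!j = b} / n"
      using assms(3) by (intro divide_left_mono) auto
    then show ?thesis using one_bit_bound[OF assms(2,3), of b] unfolding True by linarith
  next
    case False then show ?thesis using bitwise_bound[OF assms(2,3)] assms(1) by simp
  qed
  also have "\<dots> \<le> measure (measure_pmf (mut x)) E" using assms(4) by (rule measure_pmf.finite_measure_mono) simp
  finally show ?thesis .
qed

lemma offspring_prob:
  assumes P: "wfpop n N P" and n: "n \<ge> 1" and x0: "x0 \<in> set P" and E: "flipset x0 b \<subseteq> E"
  shows "measure (measure_pmf (offspring mode P)) {Q. \<exists>y\<in>set Q. y \<in> E} \<ge> card {j. j < n \<and> x0!j = b} / (8 * real n)"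
proof -
  define r where "r = card {j. j < n \<and> x0!j = b} / (4 * real n)"
  have lx0: "length x0 = n" using P x0 by (auto simp: wfpop_def)
  have cn: "card {j. j < n \<and> x0!j = b} \<le> n"
    using card_mono[of "{..<n}" "{j. j < n \<and> x0!j = b}"] by auto
  have r1: "0 \<le> r" "r \<le> 1" using cn n by (auto simp: r_def field_simps)
  have r2: "r / 2 = card {j. j < n \<and> x0!j = b} / (8 * real n)" by (simp add: r_def)
  have m1: "measure (measure_pmf (one_bit_mut x0)) E \<ge> r" unfolding r_def by (rule mut_bound[OF _ lx0 n E]) simp
  have m2: "measure (measure_pmf (bitwise_mut x0)) E \<ge> r" unfolding r_def by (rule mut_bound[OF _ lx0 n E]) simp
  have lP: "length P = N" using P by (simp add: wfpop_def)
  show ?thesis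
  proof (cases mode)
    case OneBitEach
    then have "r \<le> measure (measure_pmf (offspring mode P)) {Q. \<exists>y\<in>set Q. y \<in> E}"
      using each_bound[where mut=one_bit_mut and E=E and r=r, OF x0 m1] by simp
    then show ?thesis using r1 r2 by linarith
  next
    case BitwiseEach
    then have "r \<le> measure (measure_pmf (offspring mode P)) {Q. \<exists>y\<in>set Q. y \<in> E}"
      using each_bound[where mut=bitwise_mut and E=E and r=r, OF x0 m2] by simp
    then show ?thesis using r1 r2 by linarith
  next
    case OneBitRandom then show ?thesis using rand_bound[where mut=one_bit_mut and E=E and r=r, OF x0 lP m1 r1] r2 lP by simp
  next
    case BitwiseRandom then show ?thesis using rand_bound[where mut=bitwise_mut and E=E and r=r, OF x0 lP m2 r1] r2 lP by simp
  qed
qed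

lemma step_prob:
  assumes P: "wfpop n N P" and n: "n \<ge> 1" and N: "N \<ge> 4*(n+1)" and vt: "valid_tiebreak oneminmax tb"
    and x0: "x0 \<in> set P" and E: "flipset x0 b \<subseteq> {y. cnt y = w}"
  shows "measure (measure_pmf (nsga2_step mode oneminmax N tb t P)) {P'. w \<in> vals P'} \<ge> card {j. j < n \<and> x0!j = b} / (8 * real n)"
proof -
  have "card {j. j < n \<and> x0!j = b} / (8 * real n) \<le> measure (measure_pmf (offspring mode P)) {Q. \<exists>y\<in>set Q. y \<in> {y. cnt y = w}}"
    by (rule offspring_prob[OF P n x0 E])
  also have "\<dots> \<le> measure (measure_pmf (nsga2_step mode oneminmax N tb t P)) {P'. w \<in> vals P'}"
    unfolding nsga2_step_def
  proof (rule bind_prob_ge, intro ballI impI)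
    fix Q assume Q: "Q \<in> set_pmf (offspring mode P)" "Q \<in> {Q. \<exists>y\<in>set Q. y \<in> {y. cnt y = w}}"
    have wQ: "wfpop n N Q" using offspring_support[OF P _ Q(1)] N by simp
    have "w \<in> vals Q" using Q(2) by (auto simp: vals_def)
    then show "set_pmf (bind_pmf (pmf_of_set (survivor_sets oneminmax N tb t (P @ Q)))
               (\<lambda>A. return_pmf (map (\<lambda>i. (P @ Q) ! i) (sorted_list_of_set A)))) \<subseteq> {P'. w \<in> vals P'}"
      using K_support[OF P wQ N vt] by blast
  qed
  finally show ?thesis .
qed


definition upS :: "nat \<Rightarrow> nat \<Rightarrow> nat set \<Rightarrow> nat set" where
  "upS n v0 V = {w. v0 < w \<and> w \<le> n \<and> \<not> {v0..w} \<subseteq> V}"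
definition dnS :: "nat \<Rightarrow> nat set \<Rightarrow> nat set" where
  "dnS v0 V = {w. w < v0 \<and> \<not> {w..v0} \<subseteq> V}"
definition Zf :: "nat \<Rightarrow> nat \<Rightarrow> nat set \<Rightarrow> nat" where
  "Zf n v0 V = card (upS n v0 V) + card (dnS v0 V)"

lemma up_struct:
  assumes "v0 \<in> V" "v0 \<le> n"
  shows "\<exists>a. v0 \<le> a \<and> a \<le> n \<and> {v0..a} \<subseteq> V \<and> upS n v0 V = {a<..n}"
proof (cases "upS n v0 V = {}")
  case True
  have "{v0..n} \<subseteq> V"
  proof
    fix w assume w: "w \<in> {v0..n}"
    show "w \<in> V"
    proof (cases "w = v0")
      case False
      then have "w \<notin> upS n v0 V" using True by simp
      then have "{v0..w} \<subseteq> V" using w False by (auto simp: upS_def)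
      then show ?thesis using w by auto
    qed (use assms in simp)
  qed
  then show ?thesis using True assms by (intro exI[of _ n]) auto
next
  case False
  have fin: "finite (upS n v0 V)" by (rule finite_subset[of _ "{..n}"]) (auto simp: upS_def)
  define m where "m = Min (upS n v0 V)"
  have mS: "m \<in> upS n v0 V" using Min_in[OF fin False] by (simp add: m_def)
  have mmin: "\<And>w. w \<in> upS n v0 V \<Longrightarrow> m \<le> w" using Min_le[OF fin] by (simp add: m_def)
  have m1: "v0 < m" "m \<le> n" using mS by (auto simp: upS_def)
  define a where "a = m - 1"
  have sub: "{v0..a} \<subseteq> V"
  proof
    fix w assume w: "w \<in> {v0..a}"
    show "w \<in> V"
    proof (cases "w = v0")
      case False
      then have "w \<notin> upS n v0 V" using mmin w m1 by (force simp: a_def)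
      then have "{v0..w} \<subseteq> V" using w False m1 by (auto simp: upS_def a_def)
      then show ?thesis using w by auto
    qed (use assms in simp)
  qed
  have "upS n v0 V = {a<..n}"
  proof
    show "upS n v0 V \<subseteq> {a<..n}" using mmin m1 by (force simp: a_def upS_def)
    show "{a<..n} \<subseteq> upS n v0 V"
    proof
      fix w assume w: "w \<in> {a<..n}"
      then have "m \<le> w" using m1 by (auto simp: a_def)
      moreover have "\<not> {v0..m} \<subseteq> V" using mS by (simp add: upS_def)
      moreover have "{v0..m} \<subseteq> {v0..w}" using \<open>m \<le> w\<close> by auto
      ultimately have "\<not> {v0..w} \<subseteq> V" by blast
      then show "w \<in> upS n v0 V" using w m1 by (auto simp: upS_def a_def)
    qed
  qed
  then show ?thesis using sub m1 by (intro exI[of _ a]) (auto simp: a_def)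
qed

lemma dn_struct:
  assumes "v0 \<in> V"
  shows "\<exists>b. b \<le> v0 \<and> {b..v0} \<subseteq> V \<and> dnS v0 V = {..<b}"
proof (cases "dnS v0 V = {}")
  case True
  have "{0..v0} \<subseteq> V"
  proof
    fix w assume w: "w \<in> {0..v0}"
    show "w \<in> V"
    proof (cases "w = v0")
      case False
      then have "w \<notin> dnS v0 V" using True by simp
      then have "{w..v0} \<subseteq> V" using w False by (auto simp: dnS_def)
      then show ?thesis using w by auto
    qed (use assms in simp)
  qed
  then show ?thesis using True assms by (intro exI[of _ 0]) auto
next
  case False
  have fin: "finite (dnS v0 V)" by (rule finite_subset[of _ "{..<v0}"]) (auto simp: dnS_def)
  define m where "m = Max (dnS v0 V)"
  have mS: "m \<in> dnS v0 V" using Max_in[OF fin False] by (simp add: m_def)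
  have mmax: "\<And>w. w \<in> dnS v0 V \<Longrightarrow> w \<le> m" using Max_ge[OF fin] by (simp add: m_def)
  have m1: "m < v0" using mS by (auto simp: dnS_def)
  define b where "b = m + 1"
  have sub: "{b..v0} \<subseteq> V"
  proof
    fix w assume w: "w \<in> {b..v0}"
    show "w \<in> V"
    proof (cases "w = v0")
      case False
      then have "w \<notin> dnS v0 V" using mmax w m1 by (force simp: b_def)
      then have "{w..v0} \<subseteq> V" using w False m1 by (auto simp: dnS_def b_def)
      then show ?thesis using w by auto
    qed (use assms in simp)
  qed
  have "dnS v0 V = {..<b}"
  proof
    show "dnS v0 V \<subseteq> {..<b}" using mmax by (force simp: b_def)
    show "{..<b} \<subseteq> dnS v0 V"
    proof
      fix w assume w: "w \<in> {..<b}"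
      then have "w \<le> m" by (auto simp: b_def)
      moreover have "\<not> {m..v0} \<subseteq> V" using mS by (simp add: dnS_def)
      moreover have "{m..v0} \<subseteq> {w..v0}" using \<open>w \<le> m\<close> by auto
      ultimately have "\<not> {w..v0} \<subseteq> V" by blast
      then show "w \<in> dnS v0 V" using w m1 by (auto simp: dnS_def b_def)
    qed
  qed
  then show ?thesis using sub m1 by (intro exI[of _ b]) (auto simp: b_def)
qed

lemma Zf_le: "v0 \<le> n \<Longrightarrow> Zf n v0 V \<le> n"
proof -
  assume v: "v0 \<le> n"
  have "card (upS n v0 V) \<le> card {v0<..n}" by (rule card_mono) (auto simp: upS_def)
  moreover have "card (dnS v0 V) \<le> card {..<v0}" by (rule card_mono) (auto simp: dnS_def)
  ultimately show ?thesis using v by (simp add: Zf_def)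
qed

lemma up_mono: "V \<subseteq> V' \<Longrightarrow> upS n v0 V' \<subseteq> upS n v0 V"
  unfolding upS_def by auto
lemma dn_mono: "V \<subseteq> V' \<Longrightarrow> dnS v0 V' \<subseteq> dnS v0 V"
  unfolding dnS_def by auto

lemma Zf0:
  assumes "v0 \<in> V" "v0 \<le> n" "Zf n v0 V = 0"
  shows "{0..n} \<subseteq> V"
proof -
  have f1: "finite (upS n v0 V)" by (rule finite_subset[of _ "{..n}"]) (auto simp: upS_def)
  have f2: "finite (dnS v0 V)" by (rule finite_subset[of _ "{..<v0}"]) (auto simp: dnS_def)
  have e: "upS n v0 V = {}" "dnS v0 V = {}" using assms(3) f1 f2 by (auto simp: Zf_def)
  show ?thesis
  proof
    fix w assume w: "w \<in> {0..n}"
    consider "w = v0" | "v0 < w" | "w < v0" by linarith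
    then show "w \<in> V"
    proof cases
      case 1 then show ?thesis using assms by simp
    next
      case 2
      then have "{v0..w} \<subseteq> V" using e w by (auto simp: upS_def)
      then show ?thesis using 2 by auto
    next
      case 3
      then have "{w..v0} \<subseteq> V" using e w by (auto simp: dnS_def)
      then show ?thesis using 3 by auto
    qed
  qed
qed


lemma card_up: "upS n v0 V = {a<..n} \<Longrightarrow> card (upS n v0 V) = n - a" by simp
lemma card_dn: "dnS v0 V = {..<b} \<Longrightarrow> card (dnS v0 V) = b" by simp

context
  fixes n N :: nat and mode :: offspring_mode and tb :: tiebreak and t :: nat
  assumes n1: "n \<ge> 1" and NN: "N \<ge> 4*(n+1)" and vt: "valid_tiebreak oneminmax tb"
begin

abbreviation "stp P \<equiv> nsga2_step mode oneminmax N tb t P"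

lemma drift_setup:
  assumes P: "wfpop n N P" and v0: "v0 \<in> vals P" "v0 \<le> n"
  obtains XA XB where
    "\<forall>P'\<in>set_pmf (stp P). real (Zf n v0 (vals P')) + indicator XA P' + indicator XB P' \<le> real (Zf n v0 (vals P))"
    "measure (measure_pmf (stp P)) XA + measure (measure_pmf (stp P)) XB \<ge> real (Zf n v0 (vals P)) / (8 * real n)"
proof -
  define V where "V = vals P"
  obtain a where a: "v0 \<le> a" "a \<le> n" "{v0..a} \<subseteq> V" "upS n v0 V = {a<..n}"
    using up_struct[OF v0[folded V_def]] by blast
  obtain b where b: "b \<le> v0" "{b..v0} \<subseteq> V" "dnS v0 V = {..<b}"
    using dn_struct[OF v0(1)[folded V_def]] by blast
  define XA where "XA = (if a < n then {P'. a+1 \<in> vals P'} else {})"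
  define XB where "XB = (if 0 < b then {P'. b-1 \<in> vals P'} else {})"
  have Z: "Zf n v0 V = (n - a) + b" unfolding Zf_def a(4) b(3) by simp
  have pw: "\<forall>P'\<in>set_pmf (stp P). real (Zf n v0 (vals P')) + indicator XA P' + indicator XB P' \<le> real (Zf n v0 V)"
  proof
    fix P' assume P': "P' \<in> set_pmf (stp P)"
    have VV: "V \<subseteq> vals P'" using step_support[OF P NN vt P'] by (simp add: V_def)
    have u1: "upS n v0 (vals P') \<subseteq> {a<..n}" using up_mono[OF VV, of n v0] unfolding a(4) .
    have d1: "dnS v0 (vals P') \<subseteq> {..<b}" using dn_mono[OF VV, of v0] unfolding b(3) .
    have cu: "card (upS n v0 (vals P')) + (if P' \<in> XA then 1 else 0) \<le> n - a"
    proof (cases "P' \<in> XA")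
      case True
      then have an: "a < n" "a+1 \<in> vals P'" by (auto simp: XA_def split: if_splits)
      have "upS n v0 (vals P') \<subseteq> {a+1<..n}"
      proof
        fix w assume w: "w \<in> upS n v0 (vals P')"
        have "w \<noteq> a + 1"
        proof
          assume "w = a + 1"
          have "{v0..a+1} \<subseteq> vals P'" using a(3) VV an(2) by (auto simp: le_Suc_eq)
          then show False using w \<open>w = a+1\<close> by (simp add: upS_def)
        qed
        then show "w \<in> {a+1<..n}" using u1 w by auto
      qed
      then have "card (upS n v0 (vals P')) \<le> card {a+1<..n}" by (rule card_mono[rotated]) simp
      then show ?thesis using True an by simp
    next
      case False
      have "card (upS n v0 (vals P')) \<le> card {a<..n}" using u1 by (rule card_mono[rotated]) simp
      then show ?thesis using False by simp
    qed
    have cd: "card (dnS v0 (vals P')) + (if P' \<in> XB then 1 else 0) \<le> b"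
    proof (cases "P' \<in> XB")
      case True
      then have bn: "0 < b" "b-1 \<in> vals P'" by (auto simp: XB_def split: if_splits)
      have "dnS v0 (vals P') \<subseteq> {..<b-1}"
      proof
        fix w assume w: "w \<in> dnS v0 (vals P')"
        have "w \<noteq> b - 1"
        proof
          assume wb: "w = b - 1"
          have "{b-1..v0} \<subseteq> vals P'"
          proof
            fix u assume "u \<in> {b-1..v0}"
            then consider "u = b - 1" | "u \<in> {b..v0}" by force
            then show "u \<in> vals P'" using bn b(2) VV by cases auto
          qed
          then show False using w wb by (simp add: dnS_def)
        qed
        then show "w \<in> {..<b-1}" using d1 w by auto
      qed
      then have "card (dnS v0 (vals P')) \<le> card {..<b-1}" by (rule card_mono[rotated]) simp
      then show ?thesis using True bn by simp
    next
      case False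
      have "card (dnS v0 (vals P')) \<le> card {..<b}" using d1 by (rule card_mono[rotated]) simp
      then show ?thesis using False by simp
    qed
    have "Zf n v0 (vals P') + (if P' \<in> XA then 1 else 0) + (if P' \<in> XB then 1 else 0) \<le> Zf n v0 V"
      using cu cd Z by (simp add: Zf_def)
    then show "real (Zf n v0 (vals P')) + indicator XA P' + indicator XB P' \<le> real (Zf n v0 V)"
      by (auto simp: indicator_def split: if_splits)
  qed
  have pA: "measure (measure_pmf (stp P)) XA \<ge> real (n - a) / (8 * real n)"
  proof (cases "a < n")
    case True
    have "a \<in> V" using a by auto
    then obtain x0 where x0: "x0 \<in> set P" "cnt x0 = a" by (auto simp: V_def vals_def)
    have lx: "length x0 = n" using P x0 by (auto simp: wfpop_def)
    have fs: "flipset x0 False \<subseteq> {y. cnt y = a + 1}" using flipset_up[of x0] x0 by simp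
    have "card {j. j < n \<and> x0!j = False} = n - a" using card_false[of x0] lx x0 by simp
    then show ?thesis using step_prob[OF P n1 NN vt x0(1) fs, of mode t] True by (simp add: XA_def)
  next
    case False then show ?thesis using a by simp
  qed
  have pB: "measure (measure_pmf (stp P)) XB \<ge> real b / (8 * real n)"
  proof (cases "0 < b")
    case True
    have "b \<in> V" using b by auto
    then obtain x0 where x0: "x0 \<in> set P" "cnt x0 = b" by (auto simp: V_def vals_def)
    have lx: "length x0 = n" using P x0 by (auto simp: wfpop_def)
    have fs: "flipset x0 True \<subseteq> {y. cnt y = b - 1}" using flipset_down[of x0] x0 by auto
    have "card {j. j < n \<and> x0!j = True} = b" using cnt_card[of x0] lx x0 by simp
    then show ?thesis using step_prob[OF P n1 NN vt x0(1) fs, of mode t] True by (simp add: XB_def)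
  next
    case False then show ?thesis by simp
  qed
  have "real (Zf n v0 V) / (8 * real n) = real (n - a) / (8 * real n) + real b / (8 * real n)"
    using Z a(2) by (simp add: diff_divide_distrib add_divide_distrib)
  then have "measure (measure_pmf (stp P)) XA + measure (measure_pmf (stp P)) XB \<ge> real (Zf n v0 V) / (8 * real n)"
    using pA pB by linarith
  then show ?thesis using that pw unfolding V_def by blast
qed

end


definition phi :: "nat \<Rightarrow> nat \<Rightarrow> real" where
  "phi n z = (if z = 0 then 0 else 8 * real n * (ln (real z) + 1))"

lemma phi_nonneg: "phi n z \<ge> 0"
  unfolding phi_def by (auto intro!: mult_nonneg_nonneg add_nonneg_nonneg)

lemma phi_le: "phi n z \<le> 8 * real n * real (z + 1)"
proof (cases "z = 0")
  case False
  have "ln (real z) \<le> real z - 1" using False by (intro ln_le_minus_one) auto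
  then have "ln (real z) + 1 \<le> real (z + 1)" by simp
  then have "8 * real n * (ln (real z) + 1) \<le> 8 * real n * real (z + 1)" by (intro mult_left_mono) auto
  then show ?thesis using False unfolding phi_def by simp
qed (simp add: phi_def)

lemma phi_mono: "z' \<le> z \<Longrightarrow> phi n z' \<le> phi n z"
  unfolding phi_def by (auto intro!: mult_left_mono)

lemma phi_diff:
  assumes "z \<ge> 1" "z' \<le> z"
  shows "phi n z - phi n z' \<ge> 8 * real n * (real z - real z') / real z"
proof (cases "z' = 0")
  case True
  have "ln (real z) \<ge> 0" using assms by simp
  then have "8 * real n * 1 \<le> 8 * real n * (ln (real z) + 1)" by (intro mult_left_mono) auto
  then show ?thesis using True assms by (simp add: phi_def)
next
  case False
  have "ln (real z' / real z) \<le> real z' / real z - 1" using False assms by (intro ln_le_minus_one) auto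
  then have "ln (real z') - ln (real z) \<le> real z' / real z - 1" using False assms by (simp add: ln_div)
  then have l: "1 - real z' / real z \<le> ln (real z) - ln (real z')" by simp
  have "8 * real n * (real z - real z') / real z = 8 * real n * (1 - real z' / real z)"
    using assms by (simp add: field_simps)
  also have "\<dots> \<le> 8 * real n * (ln (real z) - ln (real z'))" using l by (intro mult_left_mono) auto
  also have "\<dots> = phi n z - phi n z'" using False assms by (simp add: phi_def algebra_simps)
  finally show ?thesis .
qed

context
  fixes n N :: nat and mode :: offspring_mode and tb :: tiebreak and t :: nat
  assumes n1: "n \<ge> 1" and NN: "N \<ge> 4*(n+1)" and vt: "valid_tiebreak oneminmax tb"
begin

lemma tail_step:
  assumes P: "wfpop n N P" and v0: "v0 \<in> vals P" "v0 \<le> n"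
  shows "(\<integral>P'. real (Zf n v0 (vals P')) \<partial>measure_pmf (nsga2_step mode oneminmax N tb t P))
           \<le> (1 - 1 / (8 * real n)) * real (Zf n v0 (vals P))"
proof -
  define M where "M = measure_pmf (nsga2_step mode oneminmax N tb t P)"
  define Z where "Z = real (Zf n v0 (vals P))"
  obtain XA XB where X:
    "\<forall>P'\<in>set_pmf (nsga2_step mode oneminmax N tb t P). real (Zf n v0 (vals P')) + indicator XA P' + indicator XB P' \<le> Z"
    "measure M XA + measure M XB \<ge> Z / (8 * real n)"
    using drift_setup[OF n1 NN vt P v0, of mode t] unfolding M_def Z_def by blast
  have i1: "integrable M (\<lambda>P'. real (Zf n v0 (vals P')))"
    unfolding M_def by (rule measure_pmf.integrable_const_bound[where B="real n"]) (auto simp: Zf_le[OF v0(2)])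
  have i2: "integrable M (indicator XA :: _ \<Rightarrow> real)" "integrable M (indicator XB :: _ \<Rightarrow> real)"
    unfolding M_def by (rule measure_pmf.integrable_const_bound[where B=1]; auto simp: indicator_def)+
  have "(\<integral>P'. real (Zf n v0 (vals P')) + indicator XA P' + indicator XB P' \<partial>M) \<le> (\<integral>P'. Z \<partial>M)"
    using X(1) i1 i2 unfolding M_def by (intro integral_mono_AE) (auto intro!: AE_pmfI)
  then have "(\<integral>P'. real (Zf n v0 (vals P')) \<partial>M) + measure M XA + measure M XB \<le> Z"
    using i1 i2 unfolding M_def by (simp add: Bochner_Integration.integral_add)
  moreover have "Z / (8 * real n) = (1 / (8 * real n)) * Z" by simp
  ultimately show ?thesis using X(2) unfolding M_def[symmetric] Z_def[symmetric] by (simp add: algebra_simps)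
qed

lemma phi_step:
  assumes P: "wfpop n N P" and v0: "v0 \<in> vals P" "v0 \<le> n" and Z1: "Zf n v0 (vals P) \<ge> 1"
  shows "(\<integral>P'. phi n (Zf n v0 (vals P')) \<partial>measure_pmf (nsga2_step mode oneminmax N tb t P))
           \<le> phi n (Zf n v0 (vals P)) - 1"
proof -
  define M where "M = measure_pmf (nsga2_step mode oneminmax N tb t P)"
  define z where "z = Zf n v0 (vals P)"
  define c where "c = 8 * real n / real z"
  have c0: "c \<ge> 0" by (simp add: c_def)
  obtain XA XB where X:
    "\<forall>P'\<in>set_pmf (nsga2_step mode oneminmax N tb t P). real (Zf n v0 (vals P')) + indicator XA P' + indicator XB P' \<le> real z"
    "measure M XA + measure M XB \<ge> real z / (8 * real n)"
    using drift_setup[OF n1 NN vt P v0, of mode t] unfolding M_def z_def by blast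
  have pw: "\<forall>P'\<in>set_pmf (nsga2_step mode oneminmax N tb t P).
      phi n (Zf n v0 (vals P')) + c * indicator XA P' + c * indicator XB P' \<le> phi n z"
  proof
    fix P' assume P': "P' \<in> set_pmf (nsga2_step mode oneminmax N tb t P)"
    define z' where "z' = Zf n v0 (vals P')"
    have h: "real z' + indicator XA P' + indicator XB P' \<le> real z" using X(1) P' by (simp add: z'_def)
    have "0 \<le> indicator XA P' + (indicator XB P' :: real)" by simp
    then have "real z' \<le> real z" using h by linarith
    then have le: "z' \<le> z" by simp
    have "phi n z - phi n z' \<ge> 8 * real n * (real z - real z') / real z"
      using phi_diff[OF Z1[folded z_def] le] .
    also have "8 * real n * (real z - real z') / real z = c * (real z - real z')" by (simp add: c_def)
    also have "c * (real z - real z') \<ge> c * (indicator XA P' + indicator XB P')"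
      using h c0 by (intro mult_left_mono) auto
    finally show "phi n (Zf n v0 (vals P')) + c * indicator XA P' + c * indicator XB P' \<le> phi n z"
      by (simp add: z'_def algebra_simps)
  qed
  have i1: "integrable M (\<lambda>P'. phi n (Zf n v0 (vals P')))"
    unfolding M_def
  proof (rule measure_pmf.integrable_const_bound[where B="8 * real n * real (n + 1)"])
    show "AE x in measure_pmf (nsga2_step mode oneminmax N tb t P). norm (phi n (Zf n v0 (vals x))) \<le> 8 * real n * real (n + 1)"
    proof (rule AE_I2)
      fix x
      have "phi n (Zf n v0 (vals x)) \<le> phi n n" using phi_mono Zf_le[OF v0(2)] by blast
      also have "\<dots> \<le> 8 * real n * real (n + 1)" by (rule phi_le)
      finally show "norm (phi n (Zf n v0 (vals x))) \<le> 8 * real n * real (n + 1)" using phi_nonneg by simp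
    qed
  qed simp
  have i2: "integrable M (\<lambda>P'. c * indicator XA P')" "integrable M (\<lambda>P'. c * indicator XB P')"
    unfolding M_def by (rule measure_pmf.integrable_const_bound[where B=c]; use c0 in \<open>auto simp: indicator_def\<close>)+
  have "(\<integral>P'. phi n (Zf n v0 (vals P')) + c * indicator XA P' + c * indicator XB P' \<partial>M) \<le> (\<integral>P'. phi n z \<partial>M)"
    using pw i1 i2 unfolding M_def by (intro integral_mono_AE) (auto intro!: AE_pmfI)
  then have "(\<integral>P'. phi n (Zf n v0 (vals P')) \<partial>M) + c * measure M XA + c * measure M XB \<le> phi n z"
    using i1 i2 unfolding M_def by (simp add: Bochner_Integration.integral_add)
  moreover have g1: "c * (measure M XA + measure M XB) \<ge> c * (real z / (8 * real n))"
    using X(2) c0 by (intro mult_left_mono) auto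
  moreover have g2: "c * (real z / (8 * real n)) = 1" using Z1 n1 by (simp add: c_def z_def)
  moreover have "c * (measure M XA + measure M XB) = c * measure M XA + c * measure M XB"
    by (rule distrib_left)
  ultimately have "(\<integral>P'. phi n (Zf n v0 (vals P')) \<partial>M) + 1 \<le> phi n z"
    by linarith
  then show ?thesis unfolding M_def[symmetric] z_def[symmetric] by simp
qed

end


lemma init_support:
  assumes "P \<in> set_pmf (init_pop n N)"
  shows "wfpop n N P"
proof -
  have fin: "finite {x::bool list. length x = n}"
    using finite_lists_length_eq[of "UNIV :: bool set" n] by simp
  have ne: "{x::bool list. length x = n} \<noteq> {}" by (auto intro: exI[of _ "replicate n False"])
  have h: "length P = N \<and> (\<forall>i<N. P!i \<in> set_pmf (random_bits n))"
    using indep_list_set[of P "\<lambda>_. random_bits n" "[0..<N]"] assms by (simp add: init_pop_def)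
  have "\<forall>x\<in>set P. length x = n"
  proof
    fix x assume "x \<in> set P"
    then obtain i where "i < N" "x = P!i" using h by (metis in_set_conv_nth)
    then show "length x = n" using h set_pmf_of_set[OF ne fin] by (auto simp: random_bits_def)
  qed
  then show ?thesis using h by (simp add: wfpop_def)
qed

lemma covers_if:
  assumes "wfpop n N P" "{0..n} \<subseteq> vals P"
  shows "covers_front n P"
  unfolding covers_front_def
proof (intro allI impI)
  fix k assume k: "k \<le> n"
  then have "n - k \<in> vals P" using assms(2) by auto
  then obtain x where x: "x \<in> set P" "cnt x = n - k" by (auto simp: vals_def)
  have "length x = n" using assms(1) x by (auto simp: wfpop_def)
  then have "oneminmax x = (real k, real (n - k))" using x k by (simp add: oneminmax_def cnt_def[symmetric])
  then show "(real k, real (n - k)) \<in> oneminmax ` set P" using x by force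
qed

definition v0h :: "pop list \<Rightarrow> nat" where "v0h h = cnt (hd (hd h))"

context
  fixes n N :: nat and mode :: offspring_mode and tb :: tiebreak
  assumes n1: "n \<ge> 1" and NN: "N \<ge> 4*(n+1)" and vt: "valid_tiebreak oneminmax tb"
begin

abbreviation "H t \<equiv> nsga2_hist mode oneminmax n N tb t"
definition "Zh h = Zf n (v0h h) (vals (last h))"

lemma hist_inv:
  "h \<in> set_pmf (H t) \<Longrightarrow> length h = Suc t \<and> wfpop n N (hd h) \<and> wfpop n N (last h) \<and> vals (hd h) \<subseteq> vals (last h)"
proof (induction t arbitrary: h)
  case 0
  then obtain P where "P \<in> set_pmf (init_pop n N)" "h = [P]" by auto
  then show ?case using init_support by auto
next
  case (Suc t)
  then obtain h0 P' where h: "h0 \<in> set_pmf (H t)" "P' \<in> set_pmf (nsga2_step mode oneminmax N tb t (last h0))" "h = h0 @ [P']"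
    by auto
  note IH = Suc.IH[OF h(1)]
  have "h0 \<noteq> []" using IH by auto
  then show ?case using IH h step_support[OF _ NN vt h(2)] by auto
qed

lemma v0_props:
  assumes "h \<in> set_pmf (H t)"
  shows "v0h h \<in> vals (last h)" "v0h h \<le> n"
proof -
  note I = hist_inv[OF assms]
  have "hd h \<noteq> []" using I NN by (auto simp: wfpop_def)
  then have m: "hd (hd h) \<in> set (hd h)" by simp
  then show "v0h h \<in> vals (last h)" using I by (auto simp: v0h_def vals_def)
  show "v0h h \<le> n" using m I cnt_le by (fastforce simp: v0h_def wfpop_def)
qed

lemma Zh_pos: "h \<in> set_pmf (H t) \<Longrightarrow> \<not> covers_front n (last h) \<Longrightarrow> Zh h \<ge> 1"
  using Zf0[OF v0_props] hist_inv covers_if unfolding Zh_def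
  by (metis One_nat_def Suc_leI neq0_conv)

lemma hist_Suc: "H (Suc t) = bind_pmf (H t) (\<lambda>h. map_pmf (\<lambda>P'. h @ [P']) (nsga2_step mode oneminmax N tb t (last h)))"
  by simp

lemma tail_hist: "(\<integral>\<^sup>+h. ennreal (real (Zh h)) \<partial>measure_pmf (H t)) \<le> ennreal (real n * (1 - 1 / (8 * real n))^t)"
proof (induction t)
  case 0
  have "(\<integral>\<^sup>+h. ennreal (real (Zh h)) \<partial>measure_pmf (H 0)) \<le> (\<integral>\<^sup>+h. ennreal (real n) \<partial>measure_pmf (H 0))"
  proof (rule nn_integral_mono_AE, rule AE_pmfI)
    fix h assume "h \<in> set_pmf (H 0)"
    then have "v0h h \<le> n" by (rule v0_props)
    then have "Zh h \<le> n" unfolding Zh_def by (rule Zf_le)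
    then show "ennreal (real (Zh h)) \<le> ennreal (real n)" by simp
  qed
  also have "\<dots> = ennreal (real n)" by (simp add: measure_pmf.emeasure_space_1)
  finally show ?case by simp
next
  case (Suc t)
  define c where "c = 1 - 1 / (8 * real n)"
  have c0: "c \<ge> 0" using n1 by (simp add: c_def field_simps)
  have "(\<integral>\<^sup>+h. ennreal (real (Zh h)) \<partial>measure_pmf (H (Suc t))) =
      (\<integral>\<^sup>+h. (\<integral>\<^sup>+P'. ennreal (real (Zh (h @ [P']))) \<partial>measure_pmf (nsga2_step mode oneminmax N tb t (last h))) \<partial>measure_pmf (H t))"
    by (simp only: hist_Suc nn_integral_bind_pmf nn_integral_map_pmf)
  also have "\<dots> \<le> (\<integral>\<^sup>+h. ennreal c * ennreal (real (Zh h)) \<partial>measure_pmf (H t))"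
  proof (rule nn_integral_mono_AE, rule AE_pmfI)
    fix h assume h: "h \<in> set_pmf (H t)"
    note I = hist_inv[OF h] and V = v0_props[OF h]
    have hne: "h \<noteq> []" using I by auto
    have eqZ: "\<And>P'. Zh (h @ [P']) = Zf n (v0h h) (vals P')" using hne by (simp add: Zh_def v0h_def)
    define M where "M = measure_pmf (nsga2_step mode oneminmax N tb t (last h))"
    have int: "integrable M (\<lambda>P'. real (Zf n (v0h h) (vals P')))"
      unfolding M_def by (rule measure_pmf.integrable_const_bound[where B="real n"]) (auto simp: Zf_le[OF V(2)])
    have "(\<integral>\<^sup>+P'. ennreal (real (Zh (h @ [P']))) \<partial>M) = ennreal (\<integral>P'. real (Zf n (v0h h) (vals P')) \<partial>M)"
      unfolding eqZ by (rule nn_integral_eq_integral[OF int]) auto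
    also have "\<dots> \<le> ennreal (c * real (Zh h))"
      using tail_step[OF n1 NN vt _ V, of mode t] I unfolding M_def Zh_def c_def by (simp add: ennreal_leI)
    finally show "(\<integral>\<^sup>+P'. ennreal (real (Zh (h @ [P']))) \<partial>measure_pmf (nsga2_step mode oneminmax N tb t (last h)))
        \<le> ennreal c * ennreal (real (Zh h))"
      unfolding M_def using c0 by (simp add: ennreal_mult)
  qed
  also have "\<dots> = ennreal c * (\<integral>\<^sup>+h. ennreal (real (Zh h)) \<partial>measure_pmf (H t))"
    by (rule nn_integral_cmult) simp
  also have "\<dots> \<le> ennreal c * ennreal (real n * c^t)" using Suc.IH by (intro mult_left_mono) (auto simp: c_def)
  also have "\<dots> = ennreal (real n * c^(Suc t))" using c0 by (simp add: ennreal_mult[symmetric] algebra_simps)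
  finally show ?case by (simp add: c_def)
qed

end


lemma T_cov:
  assumes "length h = Suc t" "s1 \<le> t" "covers_front n (h!s1)" "\<forall>s<s1. \<not> covers_front n (h!s)"
  shows "T_trunc n h = s1"
  unfolding T_trunc_def
proof (rule Least_equality)
  show "s1 = length h - 1 \<or> covers_front n (h ! s1)" using assms by simp
  fix s assume "s = length h - 1 \<or> covers_front n (h ! s)"
  then show "s1 \<le> s" using assms by (metis diff_Suc_1 not_le_imp_less)
qed

lemma T_none:
  assumes "length h = Suc t" "\<forall>s\<le>t. \<not> covers_front n (h!s)"
  shows "T_trunc n h = t"
  unfolding T_trunc_def
proof (rule Least_equality)
  show "t = length h - 1 \<or> covers_front n (h ! t)" using assms by simp
  fix s assume "s = length h - 1 \<or> covers_front n (h ! s)"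
  then show "t \<le> s" using assms by (metis diff_Suc_1 linorder_le_less_linear order.strict_implies_order)
qed

definition covd :: "nat \<Rightarrow> pop list \<Rightarrow> bool" where
  "covd n h \<longleftrightarrow> (\<exists>s<length h. covers_front n (h!s))"

lemma T_app_cov:
  assumes "length h = Suc t" "covd n h"
  shows "T_trunc n (h @ [P']) = T_trunc n h"
proof -
  define s1 where "s1 = (LEAST s. s < length h \<and> covers_front n (h!s))"
  have ex: "\<exists>s. s < length h \<and> covers_front n (h!s)" using assms(2) by (auto simp: covd_def)
  have s1: "s1 < length h" "covers_front n (h!s1)" using LeastI_ex[OF ex] by (auto simp: s1_def)
  have mn: "\<forall>s<s1. \<not> covers_front n (h!s)"
  proof (intro allI impI)
    fix s assume s: "s < s1"
    then have "\<not> (s < length h \<and> covers_front n (h!s))"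
      unfolding s1_def by (rule not_less_Least)
    then show "\<not> covers_front n (h!s)" using s s1(1) by simp
  qed
  have a: "T_trunc n h = s1" using T_cov[OF assms(1) _ s1(2) mn] s1(1) assms(1) by simp
  have b: "T_trunc n (h @ [P']) = s1"
  proof (rule T_cov[of _ "Suc t"])
    show "length (h @ [P']) = Suc (Suc t)" using assms by simp
    show "s1 \<le> Suc t" using s1 assms by simp
    show "covers_front n ((h @ [P']) ! s1)" using s1 by (simp add: nth_append)
    show "\<forall>s<s1. \<not> covers_front n ((h @ [P']) ! s)" using mn s1 by (simp add: nth_append)
  qed
  show ?thesis using a b by simp
qed

lemma T_app_none:
  assumes "length h = Suc t" "\<not> covd n h"
  shows "T_trunc n h = t" "T_trunc n (h @ [P']) = Suc t"
proof -
  have nc: "\<forall>s\<le>t. \<not> covers_front n (h!s)" using assms by (auto simp: covd_def)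
  show "T_trunc n h = t" by (rule T_none[OF assms(1) nc])
  show "T_trunc n (h @ [P']) = Suc t"
    unfolding T_trunc_def
  proof (rule Least_equality)
    show "Suc t = length (h @ [P']) - 1 \<or> covers_front n ((h @ [P']) ! Suc t)" using assms by simp
    fix s assume s: "s = length (h @ [P']) - 1 \<or> covers_front n ((h @ [P']) ! s)"
    show "Suc t \<le> s"
    proof (rule ccontr)
      assume "\<not> Suc t \<le> s"
      then have "s \<le> t" by simp
      then show False using s nc assms(1) by (auto simp: nth_append)
    qed
  qed
qed

lemma covd_app: "covd n (h @ [P']) \<longleftrightarrow> covd n h \<or> covers_front n P'"
proof
  assume "covd n (h @ [P'])"
  then obtain s where s: "s < Suc (length h)" "covers_front n ((h @ [P']) ! s)" by (auto simp: covd_def)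
  show "covd n h \<or> covers_front n P'"
  proof (cases "s < length h")
    case True then show ?thesis using s by (auto simp: covd_def nth_append)
  next
    case False then have "s = length h" using s by simp
    then show ?thesis using s by simp
  qed
next
  assume "covd n h \<or> covers_front n P'"
  then show "covd n (h @ [P'])"
  proof
    assume "covd n h"
    then obtain s where "s < length h" "covers_front n (h ! s)" by (auto simp: covd_def)
    then show ?thesis unfolding covd_def by (intro exI[of _ s]) (simp add: nth_append)
  next
    assume "covers_front n P'"
    then show ?thesis unfolding covd_def by (intro exI[of _ "length h"]) simp
  qed
qed

context
  fixes n N :: nat and mode :: offspring_mode and tb :: tiebreak
  assumes n1: "n \<ge> 1" and NN: "N \<ge> 4*(n+1)" and vt: "valid_tiebreak oneminmax tb"
begin

abbreviation "HH t \<equiv> nsga2_hist mode oneminmax n N tb t"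

definition "Yv h = real (T_trunc n h) + (if covd n h then 0 else phi n (Zh n h))"

lemma Yv_nonneg: "Yv h \<ge> 0" unfolding Yv_def using phi_nonneg by simp

lemma expect_step:
  "(\<integral>\<^sup>+h. ennreal (Yv h) \<partial>measure_pmf (HH (Suc t))) \<le> (\<integral>\<^sup>+h. ennreal (Yv h) \<partial>measure_pmf (HH t))"
proof -
  have "(\<integral>\<^sup>+h. ennreal (Yv h) \<partial>measure_pmf (HH (Suc t))) =
      (\<integral>\<^sup>+h. (\<integral>\<^sup>+P'. ennreal (Yv (h @ [P'])) \<partial>measure_pmf (nsga2_step mode oneminmax N tb t (last h))) \<partial>measure_pmf (HH t))"
    by (simp only: nsga2_hist.simps(2) nn_integral_bind_pmf nn_integral_map_pmf)
  also have "\<dots> \<le> (\<integral>\<^sup>+h. ennreal (Yv h) \<partial>measure_pmf (HH t))"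
  proof (rule nn_integral_mono_AE, rule AE_pmfI)
    fix h assume h: "h \<in> set_pmf (HH t)"
    note I = hist_inv[OF n1 NN vt h] and V = v0_props[OF n1 NN vt h]
    have hne: "h \<noteq> []" using I by auto
    define M where "M = measure_pmf (nsga2_step mode oneminmax N tb t (last h))"
    show "(\<integral>\<^sup>+P'. ennreal (Yv (h @ [P'])) \<partial>measure_pmf (nsga2_step mode oneminmax N tb t (last h))) \<le> ennreal (Yv h)"
    proof (cases "covd n h")
      case True
      have "\<And>P'. Yv (h @ [P']) = Yv h" using T_app_cov[OF _ True] I True covd_app by (simp add: Yv_def)
      then show ?thesis by (simp add: measure_pmf.emeasure_space_1)
    next
      case False
      have eqZ: "\<And>P'. Zh n (h @ [P']) = Zf n (v0h h) (vals P')" using hne by (simp add: Zh_def[OF n1 NN vt] v0h_def)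
      have nc: "\<not> covers_front n (last h)"
        using False I hne by (auto simp: covd_def last_conv_nth)
      have Z1: "Zf n (v0h h) (vals (last h)) \<ge> 1" using Zh_pos[OF n1 NN vt h nc] by (simp add: Zh_def[OF n1 NN vt])
      have Yh: "Yv h = real t + phi n (Zf n (v0h h) (vals (last h)))"
        using T_app_none(1)[OF _ False] I False by (simp add: Yv_def Zh_def[OF n1 NN vt])
      have pw: "\<And>P'. Yv (h @ [P']) \<le> real (Suc t) + phi n (Zf n (v0h h) (vals P'))"
        using T_app_none(2)[OF _ False] I False covd_app phi_nonneg eqZ by (simp add: Yv_def)
      have int0: "integrable M (\<lambda>P'. phi n (Zf n (v0h h) (vals P')))"
        unfolding M_def
      proof (rule measure_pmf.integrable_const_bound[where B="8 * real n * real (n + 1)"])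
        show "AE x in measure_pmf (nsga2_step mode oneminmax N tb t (last h)). norm (phi n (Zf n (v0h h) (vals x))) \<le> 8 * real n * real (n + 1)"
        proof (rule AE_I2)
          fix x
          have "phi n (Zf n (v0h h) (vals x)) \<le> phi n n" using phi_mono Zf_le[OF V(2)] by blast
          also have "\<dots> \<le> 8 * real n * real (n + 1)" by (rule phi_le)
          finally show "norm (phi n (Zf n (v0h h) (vals x))) \<le> 8 * real n * real (n + 1)" using phi_nonneg by simp
        qed
      qed simp
      have int: "integrable M (\<lambda>P'. real (Suc t) + phi n (Zf n (v0h h) (vals P')))"
        using int0 unfolding M_def by simp
      have "(\<integral>\<^sup>+P'. ennreal (Yv (h @ [P'])) \<partial>M) \<le> (\<integral>\<^sup>+P'. ennreal (real (Suc t) + phi n (Zf n (v0h h) (vals P'))) \<partial>M)"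
        using pw by (intro nn_integral_mono) (simp add: ennreal_leI)
      also have "\<dots> = ennreal (\<integral>P'. real (Suc t) + phi n (Zf n (v0h h) (vals P')) \<partial>M)"
        by (rule nn_integral_eq_integral[OF int]) (auto intro!: add_nonneg_nonneg phi_nonneg)
      also have "(\<integral>P'. real (Suc t) + phi n (Zf n (v0h h) (vals P')) \<partial>M) = real (Suc t) + (\<integral>P'. phi n (Zf n (v0h h) (vals P')) \<partial>M)"
        using int0 unfolding M_def by (simp add: Bochner_Integration.integral_add)
      also have "\<dots> \<le> real (Suc t) + (phi n (Zf n (v0h h) (vals (last h))) - 1)"
        using phi_step[OF n1 NN vt _ V Z1[unfolded Zh_def[OF n1 NN vt]], of mode t] I unfolding M_def by simp
      also have "\<dots> = Yv h" using Yh by simp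
      finally show ?thesis unfolding M_def by (simp add: ennreal_leI)
    qed
  qed
  finally show ?thesis .
qed

lemma expect_hist: "(\<integral>\<^sup>+h. ennreal (Yv h) \<partial>measure_pmf (HH t)) \<le> ennreal (8 * real n * (ln (real n) + 1))"
proof (induction t)
  case 0
  have "(\<integral>\<^sup>+h. ennreal (Yv h) \<partial>measure_pmf (HH 0)) \<le> (\<integral>\<^sup>+h. ennreal (8 * real n * (ln (real n) + 1)) \<partial>measure_pmf (HH 0))"
  proof (rule nn_integral_mono_AE, rule AE_pmfI)
    fix h assume h: "h \<in> set_pmf (HH 0)"
    then have l: "length h = 1" using hist_inv[OF n1 NN vt h] by simp
    have T0: "T_trunc n h = 0" unfolding T_trunc_def using l by (intro Least_equality) auto
    have "Zh n h \<le> n" unfolding Zh_def[OF n1 NN vt] by (rule Zf_le) (rule v0_props(2)[OF n1 NN vt h])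
    then have "phi n (Zh n h) \<le> phi n n" by (rule phi_mono)
    also have "\<dots> = 8 * real n * (ln (real n) + 1)" using n1 by (simp add: phi_def)
    finally have "Yv h \<le> 8 * real n * (ln (real n) + 1)" using T0 phi_nonneg[of n "Zh n h"] by (simp add: Yv_def)
    then show "ennreal (Yv h) \<le> ennreal (8 * real n * (ln (real n) + 1))" by (rule ennreal_leI)
  qed
  also have "\<dots> = ennreal (8 * real n * (ln (real n) + 1))" by (simp add: measure_pmf.emeasure_space_1)
  finally show ?case .
next
  case (Suc t)
  then show ?case using expect_step[of t] by (rule order_trans[rotated])
qed

lemma expected_bound: "expected_T mode n N tb \<le> ennreal (8 * real n * (ln (real n) + 1))"
  unfolding expected_T_def
proof (rule SUP_least)
  fix t
  have "(\<integral>\<^sup>+h. ennreal (real (T_trunc n h)) \<partial>measure_pmf (HH t)) \<le> (\<integral>\<^sup>+h. ennreal (Yv h) \<partial>measure_pmf (HH t))"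
    by (intro nn_integral_mono ennreal_leI) (simp add: Yv_def phi_nonneg)
  then show "(\<integral>\<^sup>+h. ennreal (real (T_trunc n h)) \<partial>measure_pmf (HH t)) \<le> ennreal (8 * real n * (ln (real n) + 1))"
    using expect_hist[of t] by (rule order_trans)
qed

end


context
  fixes n N :: nat and mode :: offspring_mode and tb :: tiebreak
  assumes n1: "n \<ge> 1" and NN: "N \<ge> 4*(n+1)" and vt: "valid_tiebreak oneminmax tb"
begin

lemma prob_last:
  "measure (measure_pmf (nsga2_hist mode oneminmax n N tb (Suc t))) {h. \<not> covers_front n (h!t)} =
   measure (measure_pmf (nsga2_hist mode oneminmax n N tb t)) {h. \<not> covers_front n (last h)}"
proof -
  have "measure (measure_pmf (nsga2_hist mode oneminmax n N tb (Suc t))) {h. \<not> covers_front n (h!t)} =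
    (\<integral>h. measure (measure_pmf (map_pmf (\<lambda>P'. h @ [P']) (nsga2_step mode oneminmax N tb t (last h)))) {h. \<not> covers_front n (h!t)} \<partial>measure_pmf (nsga2_hist mode oneminmax n N tb t))"
    by (simp only: nsga2_hist.simps(2) measure_bind_pmf)
  also have "\<dots> = (\<integral>h. indicator {h. \<not> covers_front n (last h)} h \<partial>measure_pmf (nsga2_hist mode oneminmax n N tb t))"
  proof (rule integral_cong_AE)
    show "AE h in measure_pmf (nsga2_hist mode oneminmax n N tb t).
       measure (measure_pmf (map_pmf (\<lambda>P'. h @ [P']) (nsga2_step mode oneminmax N tb t (last h)))) {h. \<not> covers_front n (h!t)}
       = indicator {h. \<not> covers_front n (last h)} h"
    proof (rule AE_pmfI)
      fix h assume h: "h \<in> set_pmf (nsga2_hist mode oneminmax n N tb t)"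
      have l: "length h = Suc t" using hist_inv[OF n1 NN vt h] by simp
      then have hne: "h \<noteq> []" by auto
      have "last h = h ! t" using l hne by (simp add: last_conv_nth)
      then have eq: "\<And>P'. (h @ [P']) ! t = last h" using l by (simp add: nth_append)
      have "(\<lambda>P'. h @ [P']) -` {h. \<not> covers_front n (h!t)} = (if covers_front n (last h) then {} else UNIV)"
        using eq by auto
      then show "measure (measure_pmf (map_pmf (\<lambda>P'. h @ [P']) (nsga2_step mode oneminmax N tb t (last h)))) {h. \<not> covers_front n (h!t)}
        = indicator {h. \<not> covers_front n (last h)} h" by (simp add: indicator_def)
    qed
  qed auto
  also have "\<dots> = measure (measure_pmf (nsga2_hist mode oneminmax n N tb t)) {h. \<not> covers_front n (last h)}" by simp
  finally show ?thesis .
qed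

lemma markov:
  "measure (measure_pmf (nsga2_hist mode oneminmax n N tb t)) {h. \<not> covers_front n (last h)} \<le> real n * (1 - 1 / (8 * real n))^t"
proof -
  define X where "X = {h. \<not> covers_front n (last h)}"
  have "emeasure (measure_pmf (nsga2_hist mode oneminmax n N tb t)) X = (\<integral>\<^sup>+h. indicator X h \<partial>measure_pmf (nsga2_hist mode oneminmax n N tb t))"
    by simp
  also have "\<dots> \<le> (\<integral>\<^sup>+h. ennreal (real (Zh n h)) \<partial>measure_pmf (nsga2_hist mode oneminmax n N tb t))"
  proof (rule nn_integral_mono_AE, rule AE_pmfI)
    fix h assume h: "h \<in> set_pmf (nsga2_hist mode oneminmax n N tb t)"
    show "indicator X h \<le> ennreal (real (Zh n h))"
    proof (cases "h \<in> X")
      case True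
      then have "Zh n h \<ge> 1" using Zh_pos[OF n1 NN vt h] by (simp add: X_def)
      then show ?thesis using True by simp
    qed simp
  qed
  also have "\<dots> \<le> ennreal (real n * (1 - 1 / (8 * real n))^t)" by (rule tail_hist[OF n1 NN vt])
  finally have "ennreal (measure (measure_pmf (nsga2_hist mode oneminmax n N tb t)) X) \<le> ennreal (real n * (1 - 1 / (8 * real n))^t)"
    by (simp add: measure_pmf.emeasure_eq_measure)
  moreover have "real n * (1 - 1 / (8 * real n))^t \<ge> 0" using n1 by (simp add: field_simps)
  ultimately show ?thesis unfolding X_def by (simp add: ennreal_le_iff)
qed

lemma tail_prob:
  assumes "m \<ge> 1"
  shows "prob_T_ge mode n N tb m \<le> real n * (1 - 1 / (8 * real n))^(m-1)"
proof -
  obtain t where m: "m = Suc t" using assms by (cases m) auto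
  have "prob_T_ge mode n N tb m \<le> measure (measure_pmf (nsga2_hist mode oneminmax n N tb (Suc t))) {h. \<not> covers_front n (h!t)}"
    unfolding prob_T_ge_def m by (rule measure_pmf.finite_measure_mono) auto
  also have "\<dots> = measure (measure_pmf (nsga2_hist mode oneminmax n N tb t)) {h. \<not> covers_front n (last h)}" by (rule prob_last)
  also have "\<dots> \<le> real n * (1 - 1 / (8 * real n))^t" by (rule markov)
  finally show ?thesis using m by simp
qed

end


lemma e8: "8 \<le> 2 * exp 1 ^ 2 / (exp 1 - (1::real))"
proof -
  have e1: "exp 1 > (1::real)" by simp
  have "2 * (exp 1 - 2::real)^2 = 2 * exp 1 ^ 2 - 8 * exp 1 + (8::real)" by (simp add: power2_eq_square algebra_simps)
  moreover have "0 \<le> 2 * (exp 1 - 2::real)^(2::nat)" by simp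
  moreover have "8 * (exp 1 - 1) = 8 * exp 1 - (8::real)" by simp
  ultimately have "8 * (exp 1 - 1) \<le> (2 * exp 1 ^ 2 :: real)" by linarith
  then show ?thesis using e1 by (simp add: field_simps)
qed

lemma final_real:
  fixes n :: nat and \<delta> :: real
  assumes n2: "n \<ge> 2" and d: "\<delta> \<ge> 0"
  defines "X \<equiv> 2 * exp 1 ^ 2 * (1 + \<delta>) / (exp 1 - 1) * real n * ln (real n)"
  defines "m \<equiv> nat \<lceil>X\<rceil>"
  shows "m \<ge> 1" "real n * (1 - 1 / (8 * real n))^(m-1) \<le> 2 * real n powr (- \<delta>)"
proof -
  define K where "K = 2 * exp 1 ^ 2 / (exp 1 - (1::real))"
  define L where "L = ln (real n)"
  have K8: "K \<ge> 8" using e8 by (simp add: K_def)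
  have L0: "L > 0" using n2 by (simp add: L_def)
  have XK: "X = K * (1 + \<delta>) * real n * L" by (simp add: X_def K_def L_def)
  have X8: "X \<ge> 8 * (1 + \<delta>) * real n * L"
  proof -
    have "0 \<le> (1 + \<delta>) * real n * L" using d L0 by simp
    then have "8 * ((1 + \<delta>) * real n * L) \<le> K * ((1 + \<delta>) * real n * L)" using K8 by (intro mult_right_mono) auto
    then show ?thesis unfolding XK by (simp only: mult.assoc)
  qed
  have "0 < 8 * (1 + \<delta>) * real n * L" using d L0 n2 by (intro mult_pos_pos) auto
  then have Xpos: "X > 0" using X8 by linarith
  have mX: "real m \<ge> X" unfolding m_def using Xpos by linarith
  show m1: "m \<ge> 1" unfolding m_def using Xpos by linarith
  define c where "c = 1 / (8 * real n)"
  have c0: "0 < c" "c \<le> 1/2" using n2 by (auto simp: c_def field_simps)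
  have "(1 - c)^(m-1) \<le> exp (-c)^(m-1)"
    using c0 exp_ge_add_one_self[of "-c"] by (intro power_mono) auto
  also have "\<dots> = exp (- (c * real (m-1)))" by (simp add: exp_of_nat_mult[symmetric] mult.commute)
  also have "\<dots> \<le> exp (- ((1 + \<delta>) * L - c))"
  proof -
    have "c * real (m - 1) = c * real m - c" using m1 by (simp add: of_nat_diff algebra_simps)
    also have "c * real m \<ge> c * X" using mX c0 by (intro mult_left_mono) auto
    moreover have "c * X \<ge> c * (8 * (1 + \<delta>) * real n * L)" using X8 c0 by (intro mult_left_mono) auto
    moreover have "c * (8 * (1 + \<delta>) * real n * L) = (1 + \<delta>) * L" using n2 by (simp add: c_def field_simps)
    ultimately have "c * real (m - 1) \<ge> (1 + \<delta>) * L - c" by linarith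
    then show ?thesis by simp
  qed
  finally have p: "(1 - c)^(m-1) \<le> exp (- ((1 + \<delta>) * L - c))" .
  have "real n * (1 - c)^(m-1) \<le> real n * exp (- ((1 + \<delta>) * L - c))"
    using p by (intro mult_left_mono) auto
  also have "real n * exp (- ((1 + \<delta>) * L - c)) = exp (- \<delta> * L) * exp c"
  proof -
    have "real n = exp L" using n2 by (simp add: L_def)
    then have "real n * exp (- ((1 + \<delta>) * L - c)) = exp (L + (- ((1 + \<delta>) * L - c)))" by (simp add: exp_add)
    also have "L + (- ((1 + \<delta>) * L - c)) = - \<delta> * L + c" by (simp add: algebra_simps)
    finally show ?thesis by (simp add: exp_add[symmetric])
  qed
  also have "exp (- \<delta> * L) = real n powr (- \<delta>)" using n2 by (simp add: powr_def L_def)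
  also have "real n powr (- \<delta>) * exp c \<le> real n powr (- \<delta>) * 2"
  proof -
    have "norm c \<le> 1/2" using c0 by simp
    then have "exp c \<le> 2" using exp_bound_half[of c] by simp
    then show ?thesis by (intro mult_left_mono) auto
  qed
  finally show "real n * (1 - 1 / (8 * real n))^(m-1) \<le> 2 * real n powr (- \<delta>)" by (simp add: c_def mult.commute)
qed

theorem theorem2:
  fixes n N :: nat and mode :: offspring_mode and tb :: tiebreak
  assumes "n \<ge> 1" and "N \<ge> 4 * (n + 1)" and "valid_tiebreak oneminmax tb"
  shows "expected_T mode n N tb \<le> ennreal (2 * exp 1 ^ 2 / (exp 1 - 1) * real n * (ln (real n) + 1)) \<and>
         (\<forall>\<delta>::real. \<delta> \<ge> 0 \<longrightarrow>
           prob_T_ge mode n N tb (nat \<lceil>2 * exp 1 ^ 2 * (1 + \<delta>) / (exp 1 - 1) * real n * ln (real n)\<rceil>)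
             \<le> 2 * real n powr (- \<delta>))"
proof (intro conjI allI impI)
  note n1 = assms(1) and NN = assms(2) and vt = assms(3)
  have "expected_T mode n N tb \<le> ennreal (8 * real n * (ln (real n) + 1))"
    by (rule expected_bound[OF n1 NN vt])
  also have "\<dots> \<le> ennreal (2 * exp 1 ^ 2 / (exp 1 - 1) * real n * (ln (real n) + 1))"
  proof (rule ennreal_leI)
    have "0 \<le> real n * (ln (real n) + 1)" using n1 by simp
    then have "8 * (real n * (ln (real n) + 1)) \<le> 2 * exp 1 ^ 2 / (exp 1 - 1) * (real n * (ln (real n) + 1))"
      using e8 by (intro mult_right_mono) auto
    then show "8 * real n * (ln (real n) + 1) \<le> 2 * exp 1 ^ 2 / (exp 1 - 1) * real n * (ln (real n) + 1)"
      by (simp add: mult.assoc)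
  qed
  finally show "expected_T mode n N tb \<le> ennreal (2 * exp 1 ^ 2 / (exp 1 - 1) * real n * (ln (real n) + 1))" .
next
  fix \<delta> :: real assume d: "\<delta> \<ge> 0"
  note n1 = assms(1) and NN = assms(2) and vt = assms(3)
  define m where "m = nat \<lceil>2 * exp 1 ^ 2 * (1 + \<delta>) / (exp 1 - 1) * real n * ln (real n)\<rceil>"
  show "prob_T_ge mode n N tb m \<le> 2 * real n powr (- \<delta>)"
  proof (cases "n = 1")
    case True
    then have "m = 0" by (simp add: m_def)
    then have "prob_T_ge mode n N tb m \<le> 1" by (simp add: prob_T_ge_def)
    then show ?thesis using True by simp
  next
    case False
    then have n2: "n \<ge> 2" using n1 by simp
    note fr = final_real[OF n2 d]
    have "prob_T_ge mode n N tb m \<le> real n * (1 - 1 / (8 * real n))^(m-1)"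
      by (rule tail_prob[OF n1 NN vt]) (use fr(1) in \<open>simp add: m_def\<close>)
    also have "\<dots> \<le> 2 * real n powr (- \<delta>)" using fr(2) by (simp add: m_def)
    finally show ?thesis .
  qed
qed


end
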